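(* Let $d=1$, fix $y\in\mathbb{R}$ and measurable $g:\mathbb{R}\to\mathbb{R}$. Let $X,V$ be independent real random variables, $Y=X+V$, where $P_V$ has a Lebesgue density $f_V\in C_0^1(\mathbb{R};\mathbb{R})$ and $\varphi_V(\omega)\neq0$ for Lebesgue-a.e. $\omega$. Assume $\lambda_{g,V,y}(x)=g(x)f_V(y-x)\in\Xi^0(\mathbb{R};\mathbb{C})$ and $\widetilde{\lambda}_{g,V,y}\in L^1(\mathbb{R};\mathbb{C})$. Suppose there are $c_{g,V,y}\in\mathbb{C}$ and measurable $k_{g,V,y}:(0,\infty)\to\mathbb{C}$ with $\int_0^1t|k_{g,V,y}(t)|dt<\infty$, $\int_1^\infty|k_{g,V,y}(t)|dt<\infty$, and \[ \mathcal{Q}_{g,V,y}(\omega)=e^{i\omega y}\Bigl(-i\pi c_{g,V,y}\operatorname{sgn}(\omega)+\int_0^\infty(e^{-i\omega t}-e^{i\omega t})k_{g,V,y}(t)\,dt\Bigr)\quad\text{for Lebesgue-a.e. }\omega. \] Then for every $f\in\mathcal{A}_V(\mathbb{R})$, \[ \mathcal{T}_{g,V,y}[f]=\pi c_{g,V,y}\mathcal{H}[f](y)+\int_0^\infty\bigl(f(y-t)-f(y+t)\bigr)k_{g,V,y}(t)\,dt, \] and in particular, whenever $f_Y(y)>0$, \[ \mathbb{E}[g(X)\mid Y=y]=\frac{1}{f_Y(y)}\Bigl\{\pi c_{g,V,y}\mathcal{H}[f_Y](y)+\int_0^\infty\bigl(f_Y(y-t)-f_Y(y+t)\bigr)k_{g,V,y}(t)\,dt\Bigr\}.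 \]
   Context: $\widetilde\psi(\omega)=\int e^{i\omega x}\psi(x)dx$; $\varphi_V(\omega)=\mathbb{E}[e^{i\omega V}]$. $C_0^1$: $C^1$ functions with the function and derivative vanishing at infinity; $\Xi^0=C_0\cap L^1$. $\mathcal{Q}_{g,V,y}(\omega)=\widetilde{\lambda}_{g,V,y}(\omega)/\varphi_V(-\omega)$ where $\varphi_V(-\omega)\ne0$, and $0$ otherwise. Hilbert transform: $\mathcal{H}[f](y)=\frac1\pi\lim_{\varepsilon\downarrow0}\int_{|t|>\varepsilon}\frac{f(y-t)}{t}\,dt$. $\mathcal{A}_V(\mathbb{R})=\{f_V*\mu:\mu\text{ finite signed Radon measure}\}$ with $\|f_V*\mu\|_{\mathcal{A}_V}=\|\mu\|_{TV}$; $\mathcal{T}_{g,V,y}$ is the unique continuous linear functional on $\mathcal{A}_V$ with $\mathcal{T}_{g,V,y}[f_V*\mu]=\int\lambda_{g,V,y}\,d\mu$. $f_Y=f_V*P_X$ and $\mathbb{E}[g(X)\mid Y=y]=f_Y(y)^{-1}\int g(x)f_V(y-x)dP_X(x)$. *)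

theory Defs
  imports "HOL-Probability.Probability"
begin

definition C0_1 :: "(real \<Rightarrow> real) \<Rightarrow> bool" where
  "C0_1 f \<longleftrightarrow> (\<exists>f'. (\<forall>x. (f has_real_derivative f' x) (at x)) \<and> continuous_on UNIV f'
      \<and> (f \<longlongrightarrow> 0) at_infinity \<and> (f' \<longlongrightarrow> 0) at_infinity)"

definition Xi0 :: "(real \<Rightarrow> complex) \<Rightarrow> bool" where
  "Xi0 h \<longleftrightarrow> continuous_on UNIV h \<and> (h \<longlongrightarrow> 0) at_infinity \<and> integrable lborel h"

definition fourier :: "(real \<Rightarrow> complex) \<Rightarrow> real \<Rightarrow> complex" where
  "fourier \<psi> \<omega> = (CLINT x|lborel. iexp (\<omega> * x) * \<psi> x)"

definition lam :: "(real \<Rightarrow> real) \<Rightarrow> (real \<Rightarrow> real) \<Rightarrow> real \<Rightarrow> real \<Rightarrow> complex" where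
  "lam g fV y x = complex_of_real (g x * fV (y - x))"

definition Q :: "(real \<Rightarrow> real) \<Rightarrow> (real \<Rightarrow> real) \<Rightarrow> real measure \<Rightarrow> real \<Rightarrow> real \<Rightarrow> complex" where
  "Q g fV PV y \<omega> = (if char PV (- \<omega>) \<noteq> 0 then fourier (lam g fV y) \<omega> / char PV (- \<omega>) else 0)"

definition hilbert :: "(real \<Rightarrow> real) \<Rightarrow> real \<Rightarrow> real" where
  "hilbert f y = (1 / pi) * Lim (at_right 0) (\<lambda>\<epsilon>. LINT t:{t. \<epsilon> < \<bar>t\<bar>}|lborel. f (y - t) / t)"

definition conv_meas :: "(real \<Rightarrow> real) \<Rightarrow> real measure \<Rightarrow> real \<Rightarrow> real" where
  "conv_meas fV \<mu> x = (\<integral>z. fV (x - z) \<partial>\<mu>)"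

text \<open>E[g(X) | Y = y] := f_Y(y)^{-1} int g(x) f_V(y - x) dP_X(x), with f_Y = f_V * P_X.\<close>
definition cond_exp_at :: "(real \<Rightarrow> real) \<Rightarrow> (real \<Rightarrow> real) \<Rightarrow> real measure \<Rightarrow> real \<Rightarrow> real" where
  "cond_exp_at g fV PX y = (\<integral>x. g x * fV (y - x) \<partial>PX) / conv_meas fV PX y"

end

theory Submission
  imports Defs
begin


lemma exp_cos_sin_I0i:
  fixes e u :: real assumes e: "0 < e"
  shows "set_integrable lborel {0<..} (\<lambda>w. exp (-(e*w)) * cos (u*w))"
    "(LBINT w:{0<..}. exp (-(e*w)) * cos (u*w)) = e / (e^2 + u^2)"
    "set_integrable lborel {0<..} (\<lambda>w. exp (-(e*w)) * sin (u*w))"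
    "(LBINT w:{0<..}. exp (-(e*w)) * sin (u*w)) = u / (e^2 + u^2)"
proof -
  have ie: "set_integrable lborel {0<..} (\<lambda>w. exp (-(w*e)))"
    using integrable_I0i_exp_mscale[OF e] .
  show i1: "set_integrable lborel {0<..} (\<lambda>w. exp (-(e*w)) * cos (u*w))"
    unfolding set_integrable_def
    apply (rule Bochner_Integration.integrable_bound[OF ie[unfolded set_integrable_def]])
     apply measurable
    apply (auto simp: indicator_def abs_mult mult.commute intro!: mult_left_le)
    done
  show i2: "set_integrable lborel {0<..} (\<lambda>w. exp (-(e*w)) * sin (u*w))"
    unfolding set_integrable_def
    apply (rule Bochner_Integration.integrable_bound[OF ie[unfolded set_integrable_def]])
     apply measurable
    apply (auto simp: indicator_def abs_mult mult.commute intro!: mult_left_le)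
    done
  have pos: "e^2 + u^2 > 0" using e by (simp add: add_pos_nonneg)
  have lim0: "((\<lambda>t. exp (- (e * t))) \<longlongrightarrow> 0) at_top"
    using e
    by (auto intro!: exp_at_bot[THEN filterlim_compose] filterlim_tendsto_pos_mult_at_top filterlim_ident
             simp: filterlim_uminus_at_bot)
  let ?F = "\<lambda>w. exp (-(e*w)) * (u * sin (u*w) - e * cos (u*w)) / (e^2+u^2)"
  have "(LBINT w=0..\<infinity>. exp (-(e*w)) * cos (u*w)) = 0 - (- e / (e^2+u^2))"
  proof (rule interval_integral_FTC_integrable)
    show "(?F has_vector_derivative exp (-(e*x)) * cos (u*x)) (at x)" for x
      unfolding has_real_derivative_iff_has_vector_derivative[symmetric]
      using e by (auto intro!: derivative_eq_intros simp: divide_simps) (simp_all add: power2_eq_square algebra_simps)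
    show "set_integrable lborel (einterval 0 \<infinity>) (\<lambda>w. exp (-(e*w)) * cos (u*w))"
      using i1 by (simp add: zero_ereal_def)
    show "((?F \<circ> real_of_ereal) \<longlongrightarrow> - e / (e^2+u^2)) (at_right 0)"
      using e by (auto simp: zero_ereal_def ereal_tendsto_simps intro!: tendsto_eq_intros)
    have Flim: "(?F \<longlongrightarrow> 0) at_top"
    proof (rule Lim_null_comparison[where g="\<lambda>w. exp (-(e*w)) * (\<bar>u\<bar> + e) / (e^2+u^2)"])
      show "\<forall>\<^sub>F x in at_top. norm (?F x) \<le> exp (-(e*x)) * (\<bar>u\<bar> + e) / (e^2+u^2)"
      proof (intro always_eventually allI)
        fix x :: real
        have a1: "\<bar>u * sin (u*x)\<bar> \<le> \<bar>u\<bar>" "\<bar>e * cos (u*x)\<bar> \<le> e"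
          using e abs_sin_le_one[of "u*x"] abs_cos_le_one[of "u*x"]
          by (auto simp: abs_mult intro: mult_left_le)
        have "\<bar>u * sin (u*x) - e * cos (u*x)\<bar> \<le> \<bar>u\<bar> + e"
          using a1 abs_triangle_ineq4[of "u * sin (u*x)" "e * cos (u*x)"] by linarith
        then show "norm (?F x) \<le> exp (-(e*x)) * (\<bar>u\<bar> + e) / (e^2+u^2)"
          using pos by (simp add: abs_mult divide_right_mono)
      qed
      show "((\<lambda>x. exp (-(e*x)) * (\<bar>u\<bar> + e) / (e^2+u^2)) \<longlongrightarrow> 0) at_top"
        using tendsto_mult[OF lim0 tendsto_const[of "(\<bar>u\<bar> + e) / (e^2+u^2)"]] by simp
    qed
    then show "((?F \<circ> real_of_ereal) \<longlongrightarrow> 0) (at_left \<infinity>)"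
      unfolding ereal_tendsto_simps using Flim by (simp add: comp_def)
  qed auto
  then show "(LBINT w:{0<..}. exp (-(e*w)) * cos (u*w)) = e / (e^2 + u^2)"
    by (simp add: interval_lebesgue_integral_0_infty)
  let ?G = "\<lambda>w. exp (-(e*w)) * (- (e * sin (u*w) + u * cos (u*w))) / (e^2+u^2)"
  have "(LBINT w=0..\<infinity>. exp (-(e*w)) * sin (u*w)) = 0 - (- u / (e^2+u^2))"
  proof (rule interval_integral_FTC_integrable)
    show "(?G has_vector_derivative exp (-(e*x)) * sin (u*x)) (at x)" for x
      unfolding has_real_derivative_iff_has_vector_derivative[symmetric]
      using e by (auto intro!: derivative_eq_intros simp: divide_simps) (simp_all add: power2_eq_square algebra_simps)
    show "set_integrable lborel (einterval 0 \<infinity>) (\<lambda>w. exp (-(e*w)) * sin (u*w))"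
      using i2 by (simp add: zero_ereal_def)
    show "((?G \<circ> real_of_ereal) \<longlongrightarrow> - u / (e^2+u^2)) (at_right 0)"
      using e by (auto simp: zero_ereal_def ereal_tendsto_simps intro!: tendsto_eq_intros)
    have Flim: "(?G \<longlongrightarrow> 0) at_top"
    proof (rule Lim_null_comparison[where g="\<lambda>w. exp (-(e*w)) * (\<bar>u\<bar> + e) / (e^2+u^2)"])
      show "\<forall>\<^sub>F x in at_top. norm (?G x) \<le> exp (-(e*x)) * (\<bar>u\<bar> + e) / (e^2+u^2)"
      proof (intro always_eventually allI)
        fix x :: real
        have a1: "\<bar>u * cos (u*x)\<bar> \<le> \<bar>u\<bar>" "\<bar>e * sin (u*x)\<bar> \<le> e"
          using e abs_sin_le_one[of "u*x"] abs_cos_le_one[of "u*x"]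
          by (auto simp: abs_mult intro: mult_left_le)
        have "\<bar>- (e * sin (u*x) + u * cos (u*x))\<bar> \<le> \<bar>u\<bar> + e"
          using a1 abs_triangle_ineq[of "e * sin (u*x)" "u * cos (u*x)"] by simp
        then show "norm (?G x) \<le> exp (-(e*x)) * (\<bar>u\<bar> + e) / (e^2+u^2)"
          using pos by (simp add: abs_mult divide_right_mono)
      qed
      show "((\<lambda>x. exp (-(e*x)) * (\<bar>u\<bar> + e) / (e^2+u^2)) \<longlongrightarrow> 0) at_top"
        using tendsto_mult[OF lim0 tendsto_const[of "(\<bar>u\<bar> + e) / (e^2+u^2)"]] by simp
    qed
    then show "((?G \<circ> real_of_ereal) \<longlongrightarrow> 0) (at_left \<infinity>)"
      unfolding ereal_tendsto_simps using Flim by (simp add: comp_def)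
  qed auto
  then show "(LBINT w:{0<..}. exp (-(e*w)) * sin (u*w)) = u / (e^2 + u^2)"
    by (simp add: interval_lebesgue_integral_0_infty)
qed



lemma integral_split0:
  fixes G :: "real \<Rightarrow> 'b::{banach, second_countable_topology}"
  assumes A: "set_integrable lborel {0<..} G" and B: "set_integrable lborel {0<..} (\<lambda>w. G (-w))"
  shows "integrable lborel G" "(\<integral>w. G w \<partial>lborel) = (LINT w:{0<..}|lborel. G w + G (-w))"
proof -
  define Bf where "Bf = (\<lambda>w. indicator {..<0} w *\<^sub>R G w)"
  have Bm: "(\<lambda>x. Bf (0 + (-1) * x)) = (\<lambda>x. indicator {0<..} x *\<^sub>R G (-x))"
    by (auto simp: Bf_def indicator_def fun_eq_iff)
  have iA: "integrable lborel (\<lambda>w. indicator {0<..} w *\<^sub>R G w)"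
    using A by (simp add: set_integrable_def)
  have iB': "integrable lborel (\<lambda>x. indicator {0<..} x *\<^sub>R G (-x))"
    using B by (simp add: set_integrable_def)
  have iB: "integrable lborel Bf"
    using lborel_integrable_real_affine_iff[of "-1" Bf 0] iB' Bm by simp
  have eqG: "G = (\<lambda>w. indicator {0<..} w *\<^sub>R G w + Bf w + indicator {0} w *\<^sub>R G 0)"
    by (auto simp: Bf_def indicator_def fun_eq_iff)
  have i0: "integrable lborel (\<lambda>w. indicator {0::real} w *\<^sub>R G 0)"
    by (intro integrable_scaleR_left integrable_real_indicator) auto
  have iAB: "integrable lborel (\<lambda>w. indicator {0<..} w *\<^sub>R G w + Bf w)"
    using iA iB by simp
  show iG: "integrable lborel G"
    by (subst eqG) (use iAB i0 in simp)
  have ae: "AE w in lborel. G w = indicator {0<..} w *\<^sub>R G w + Bf w"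
    using AE_lborel_singleton[of 0] by eventually_elim (auto simp: Bf_def indicator_def)
  have "(\<integral>w. G w \<partial>lborel) = (\<integral>w. indicator {0<..} w *\<^sub>R G w + Bf w \<partial>lborel)"
    by (rule integral_cong_AE) (use iG iAB ae in auto)
  also have "\<dots> = (\<integral>w. indicator {0<..} w *\<^sub>R G w \<partial>lborel) + (\<integral>w. Bf w \<partial>lborel)"
    using iA iB by simp
  also have "(\<integral>w. Bf w \<partial>lborel) = (\<integral>x. indicator {0<..} x *\<^sub>R G (-x) \<partial>lborel)"
    using lborel_integral_real_affine[of "-1" Bf 0] Bm by simp
  also have "(\<integral>w. indicator {0<..} w *\<^sub>R G w \<partial>lborel) + (\<integral>x. indicator {0<..} x *\<^sub>R G (-x) \<partial>lborel)
      = (LINT w:{0<..}|lborel. G w + G (-w))"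
    using iA iB' by (simp add: set_lebesgue_integral_def scaleR_add_right)
  finally show "(\<integral>w. G w \<partial>lborel) = (LINT w:{0<..}|lborel. G w + G (-w))" .
qed



lemma integrable_exp_abs:
  fixes e :: real assumes e: "0 < e"
  shows "integrable lborel (\<lambda>w. exp (-(e*\<bar>w\<bar>)))"
proof -
  have h0: "set_integrable lborel {0<..} (\<lambda>w. exp (-(w*e)))"
    using integrable_I0i_exp_mscale[OF e] .
  have a: "set_integrable lborel {0<..} (\<lambda>w. exp (-(e*\<bar>w\<bar>)))"
  proof -
    have "(\<lambda>x. indicator {0<..} x *\<^sub>R exp (-(x*e))) = (\<lambda>x. indicator {0<..} x *\<^sub>R exp (-(e*\<bar>x\<bar>)) :: real)"
      by (auto simp: indicator_def fun_eq_iff mult.commute)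
    then show ?thesis using h0 unfolding set_integrable_def by simp
  qed
  then have b: "set_integrable lborel {0<..} (\<lambda>w. exp (-(e*\<bar>-w\<bar>)))" by simp
  show ?thesis using integral_split0(1)[OF a b] .
qed

lemma iexp_cis: "iexp x = cis x" by (simp add: cis_conv_exp)

lemma iexp_sum: "iexp x + iexp (-x) = complex_of_real (2 * cos x)"
  by (simp only: iexp_cis) (simp add: complex_eq_iff)
lemma iexp_diff: "iexp x - iexp (-x) = \<i> * complex_of_real (2 * sin x)"
  by (simp only: iexp_cis) (simp add: complex_eq_iff)

lemma ft_exp_abs:
  fixes e u :: real assumes e: "0 < e"
  shows "integrable lborel (\<lambda>w. iexp (w*u) * complex_of_real (exp (-(e*\<bar>w\<bar>))))"
    "(\<integral>w. iexp (w*u) * complex_of_real (exp (-(e*\<bar>w\<bar>))) \<partial>lborel) = complex_of_real (2*e/(e^2+u^2))"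
proof -
  let ?G = "\<lambda>w. iexp (w*u) * complex_of_real (exp (-(e*\<bar>w\<bar>)))"
  have ie: "integrable lborel (\<lambda>w. exp (-(e*\<bar>w\<bar>)))" using integrable_exp_abs[OF e] .
  have iG: "integrable lborel ?G"
    by (rule Bochner_Integration.integrable_bound[OF ie]) (auto simp: norm_mult)
  then have a: "set_integrable lborel {0<..} ?G" "set_integrable lborel {0<..} (\<lambda>w. ?G (-w))"
    using lborel_integrable_real_affine[OF iG, of "-1" 0]
    by (auto simp: set_integrable_def intro!: integrable_mult_indicator)
  have "(\<integral>w. ?G w \<partial>lborel) = (LINT w:{0<..}|lborel. ?G w + ?G (-w))"
    using integral_split0(2)[OF a] .
  also have "\<dots> = (LINT w:{0<..}|lborel. complex_of_real (2 * (exp (-(e*w)) * cos (u*w))))"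
  proof (rule set_lebesgue_integral_cong, simp, intro allI impI)
    fix w :: real assume "w \<in> {0<..}"
    then have "?G w + ?G (-w) = (iexp (w*u) + iexp (-(w*u))) * complex_of_real (exp (-(e*w)))"
      by (simp add: algebra_simps)
    also have "\<dots> = complex_of_real (2 * (exp (-(e*w)) * cos (u*w)))"
      by (simp only: iexp_sum) (simp add: mult.commute)
    finally show "?G w + ?G (-w) = complex_of_real (2 * (exp (-(e*w)) * cos (u*w)))" .
  qed
  also have "\<dots> = complex_of_real (2 * (LBINT w:{0<..}. exp (-(e*w)) * cos (u*w)))"
    by (simp only: of_real_mult set_integral_mult_right of_real_numeral)
      (simp add: set_lebesgue_integral_def scaleR_conv_of_real del: of_real_mult flip: of_real_mult)
  also have "\<dots> = complex_of_real (2*e/(e^2+u^2))"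
    by (simp add: exp_cos_sin_I0i(2)[OF e])
  finally have X: "(\<integral>w. ?G w \<partial>lborel) = complex_of_real (2*e/(e^2+u^2))" .
  then show "(\<integral>w. iexp (w*u) * complex_of_real (exp (-(e*\<bar>w\<bar>))) \<partial>lborel) = complex_of_real (2*e/(e^2+u^2))" by simp
  show "integrable lborel ?G" by (fact iG)
qed

lemma ft_exp_abs_sgn:
  fixes e u :: real assumes e: "0 < e"
  shows "integrable lborel (\<lambda>w. iexp (w*u) * complex_of_real (exp (-(e*\<bar>w\<bar>)) * sgn w))"
    "(\<integral>w. iexp (w*u) * complex_of_real (exp (-(e*\<bar>w\<bar>)) * sgn w) \<partial>lborel) = \<i> * complex_of_real (2*u/(e^2+u^2))"
proof -
  let ?G = "\<lambda>w. iexp (w*u) * complex_of_real (exp (-(e*\<bar>w\<bar>)) * sgn w)"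
  have ie: "integrable lborel (\<lambda>w. exp (-(e*\<bar>w\<bar>)))" using integrable_exp_abs[OF e] .
  have iG: "integrable lborel ?G"
    by (rule Bochner_Integration.integrable_bound[OF ie]) (auto simp: norm_mult abs_sgn sgn_if)
  then have a: "set_integrable lborel {0<..} ?G" "set_integrable lborel {0<..} (\<lambda>w. ?G (-w))"
    using lborel_integrable_real_affine[OF iG, of "-1" 0]
    by (auto simp: set_integrable_def intro!: integrable_mult_indicator)
  have "(\<integral>w. ?G w \<partial>lborel) = (LINT w:{0<..}|lborel. ?G w + ?G (-w))"
    using integral_split0(2)[OF a] .
  also have "\<dots> = (LINT w:{0<..}|lborel. \<i> * complex_of_real (2 * (exp (-(e*w)) * sin (u*w))))"
  proof (rule set_lebesgue_integral_cong, simp, intro allI impI)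
    fix w :: real assume "w \<in> {0<..}"
    then have "?G w + ?G (-w) = (iexp (w*u) - iexp (-(w*u))) * complex_of_real (exp (-(e*w)))"
      by (simp add: algebra_simps)
    also have "\<dots> = \<i> * complex_of_real (2 * (exp (-(e*w)) * sin (u*w)))"
      by (simp only: iexp_diff) (simp add: mult.commute)
    finally show "?G w + ?G (-w) = \<i> * complex_of_real (2 * (exp (-(e*w)) * sin (u*w)))" .
  qed
  also have "\<dots> = \<i> * complex_of_real (2 * (LBINT w:{0<..}. exp (-(e*w)) * sin (u*w)))"
    by (simp only: of_real_mult set_integral_mult_right of_real_numeral)
      (simp add: set_lebesgue_integral_def scaleR_conv_of_real del: of_real_mult flip: of_real_mult)
  also have "\<dots> = \<i> * complex_of_real (2*u/(e^2+u^2))"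
    by (simp add: exp_cos_sin_I0i(4)[OF e])
  finally have X: "(\<integral>w. ?G w \<partial>lborel) = \<i> * complex_of_real (2*u/(e^2+u^2))" .
  then show "(\<integral>w. iexp (w*u) * complex_of_real (exp (-(e*\<bar>w\<bar>)) * sgn w) \<partial>lborel) = \<i> * complex_of_real (2*u/(e^2+u^2))" by simp
  show "integrable lborel ?G" by (fact iG)
qed



definition Pk :: "real \<Rightarrow> real \<Rightarrow> real" where
  "Pk e u = e / (pi * (u^2 + e^2))"

lemma Pk_nonneg: "0 < e \<Longrightarrow> 0 \<le> Pk e u"
  by (simp add: Pk_def add_pos_nonneg less_imp_le)

lemma Pk_even: "Pk e (-u) = Pk e u" by (simp add: Pk_def)

lemma Pk_meas[measurable]: "Pk e \<in> borel_measurable borel"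
  unfolding Pk_def by measurable

lemma cauchy_density:
  shows "integrable lborel (\<lambda>s. 1 / (pi * (1 + s^2)))" "(\<integral>s. 1 / (pi * (1 + s^2)) \<partial>lborel) = 1"
proof -
  have i: "integrable lborel (\<lambda>x::real. inverse (1 + x^2))"
  proof -
    have "einterval (-\<infinity>) \<infinity> = (UNIV::real set)" by (auto simp: einterval_def)
    then show ?thesis using integrable_inverse_1_plus_square by (simp add: set_integrable_def)
  qed
  have v: "(\<integral>x. inverse (1 + (x::real)^2) \<partial>lborel) = pi"
    using LBINT_inverse_1_plus_square by (simp add: interval_lebesgue_integral_def set_lebesgue_integral_def)
  have eq: "(\<lambda>s. 1 / (pi * (1 + s^2))) = (\<lambda>s. inverse (1 + s^2) / pi)"
    by (simp add: fun_eq_iff divide_simps)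
  show "integrable lborel (\<lambda>s. 1 / (pi * (1 + s^2)))" unfolding eq using i by simp
  show "(\<integral>s. 1 / (pi * (1 + s^2)) \<partial>lborel) = 1" unfolding eq using v by simp
qed

lemma Pk_scale: assumes e: "0 < e" shows "e * Pk e (e * s) = 1 / (pi * (1 + s^2))"
proof -
  have a: "(e * s)^2 + e^2 = e^2 * (1 + s^2)" by (simp add: algebra_simps power2_eq_square)
  have b: "1 + s^2 > 0" by (simp add: add_pos_nonneg)
  show ?thesis unfolding Pk_def a using e b by (simp add: power2_eq_square)
qed

lemma Pk_integral:
  assumes e: "0 < e"
  shows "integrable lborel (Pk e)" "(\<integral>x. Pk e x \<partial>lborel) = 1"
proof -
  have eq: "(\<lambda>s. Pk e (0 + e * s)) = (\<lambda>s. (1/e) * (1 / (pi * (1 + s^2))))"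
  proof
    fix s
    have "Pk e (0 + e * s) = (1/e) * (e * Pk e (e * s))" using e by simp
    then show "Pk e (0 + e * s) = (1/e) * (1 / (pi * (1 + s^2)))" using Pk_scale[OF e, of s] by simp
  qed
  have "integrable lborel (\<lambda>s. Pk e (0 + e * s))"
    unfolding eq using integrable_mult_right[OF cauchy_density(1), of "1/e"] by simp
  then show "integrable lborel (Pk e)"
    using lborel_integrable_real_affine_iff[of e "Pk e" 0] e by simp
  have "(\<integral>x. Pk e x \<partial>lborel) = \<bar>e\<bar> *\<^sub>R (\<integral>s. Pk e (0 + e * s) \<partial>lborel)"
    using lborel_integral_real_affine[of e "Pk e" 0] e by simp
  also have "\<dots> = 1" unfolding eq integral_mult_right_zero using cauchy_density(2) e by simp
  finally show "(\<integral>x. Pk e x \<partial>lborel) = 1" .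
qed

lemma Pk_approx:
  fixes h :: "real \<Rightarrow> 'b::{banach, second_countable_topology}"
  assumes hm: "h \<in> borel_measurable borel" and hb: "\<And>x. norm (h x) \<le> B"
    and hc: "isCont h u"
    and ep: "\<And>n. 0 < e n" and el: "e \<longlonglongrightarrow> 0"
  shows "(\<lambda>n. \<integral>x. Pk (e n) (x - u) *\<^sub>R h x \<partial>lborel) \<longlonglongrightarrow> h u"
proof -
  have eq: "(\<integral>x. Pk (e n) (x - u) *\<^sub>R h x \<partial>lborel) = (\<integral>s. (1 / (pi * (1 + s^2))) *\<^sub>R h (u + e n * s) \<partial>lborel)" for n
  proof -
    have "(\<integral>x. Pk (e n) (x - u) *\<^sub>R h x \<partial>lborel) = \<bar>e n\<bar> *\<^sub>R (\<integral>s. Pk (e n) (u + e n * s - u) *\<^sub>R h (u + e n * s) \<partial>lborel)"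
      using lborel_integral_real_affine[of "e n" "\<lambda>x. Pk (e n) (x - u) *\<^sub>R h x" u] ep[of n] by simp
    also have "\<dots> = (\<integral>s. (e n * Pk (e n) (e n * s)) *\<^sub>R h (u + e n * s) \<partial>lborel)"
      using ep[of n] by (simp add: integral_scaleR_right[symmetric] del: integral_scaleR_right)
    also have "\<dots> = (\<integral>s. (1 / (pi * (1 + s^2))) *\<^sub>R h (u + e n * s) \<partial>lborel)"
      using Pk_scale[OF ep[of n]] by simp
    finally show ?thesis .
  qed
  have "(\<lambda>n. \<integral>s. (1 / (pi * (1 + s^2))) *\<^sub>R h (u + e n * s) \<partial>lborel) \<longlonglongrightarrow> (\<integral>s. (1 / (pi * (1 + s^2))) *\<^sub>R h u \<partial>lborel)"
  proof (rule integral_dominated_convergence[where w="\<lambda>s. B * (1 / (pi * (1 + s^2)))"])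
    show "integrable lborel (\<lambda>s. B * (1 / (pi * (1 + s^2))))"
      using integrable_mult_right[OF cauchy_density(1), of B] .
    show "AE s in lborel. (\<lambda>n. (1 / (pi * (1 + s^2))) *\<^sub>R h (u + e n * s)) \<longlonglongrightarrow> (1 / (pi * (1 + s^2))) *\<^sub>R h u"
    proof (intro AE_I2 tendsto_scaleR tendsto_const)
      fix s :: real
      have "(\<lambda>n. u + e n * s) \<longlonglongrightarrow> u + 0 * s"
        by (intro tendsto_intros el)
      then show "(\<lambda>n. h (u + e n * s)) \<longlonglongrightarrow> h u"
        using isCont_tendsto_compose[OF hc] by simp
    qed
    show "AE s in lborel. norm ((1 / (pi * (1 + s^2))) *\<^sub>R h (u + e n * s)) \<le> B * (1 / (pi * (1 + s^2)))" for n
    proof (intro AE_I2)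
      fix s :: real
      have p: "0 \<le> 1 / (pi * (1 + s^2))" by (simp add: add_pos_nonneg)
      show "norm ((1 / (pi * (1 + s^2))) *\<^sub>R h (u + e n * s)) \<le> B * (1 / (pi * (1 + s^2)))"
        using mult_right_mono[OF hb[of "u + e n * s"] p] p by (simp add: mult.commute)
    qed
  qed (use hm in auto)
  also have "(\<integral>s. (1 / (pi * (1 + s^2))) *\<^sub>R h u \<partial>lborel) = h u"
    by (subst integral_scaleR_left) (simp_all add: cauchy_density)
  finally show ?thesis unfolding eq .
qed



lemma (in pair_sigma_finite) integrable_pair_bound:
  fixes F :: "'a \<times> 'b \<Rightarrow> 'c::{banach, second_countable_topology}"
  assumes Fm: "F \<in> borel_measurable (M1 \<Otimes>\<^sub>M M2)"
    and g1: "integrable M1 g1" and g2: "integrable M2 g2"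
    and b: "\<And>x y. x \<in> space M1 \<Longrightarrow> y \<in> space M2 \<Longrightarrow> norm (F (x,y)) \<le> g1 x * g2 y"
  shows "integrable (M1 \<Otimes>\<^sub>M M2) F"
proof (rule Bochner_Integration.integrable_bound[where f="\<lambda>(x,y). \<bar>g1 x\<bar> * \<bar>g2 y\<bar>"])
  have [measurable]: "g1 \<in> borel_measurable M1" "g2 \<in> borel_measurable M2"
    using g1 g2 by auto
  show "integrable (M1 \<Otimes>\<^sub>M M2) (\<lambda>(x,y). \<bar>g1 x\<bar> * \<bar>g2 y\<bar>)"
  proof (rule Fubini_integrable)
    show "(\<lambda>(x,y). \<bar>g1 x\<bar> * \<bar>g2 y\<bar>) \<in> borel_measurable (M1 \<Otimes>\<^sub>M M2)" by measurable
    have "(\<lambda>x. \<integral>y. norm ((\<lambda>(x,y). \<bar>g1 x\<bar> * \<bar>g2 y\<bar>) (x,y)) \<partial>M2) = (\<lambda>x. \<bar>g1 x\<bar> * (\<integral>y. \<bar>g2 y\<bar> \<partial>M2))"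
      by (simp add: abs_mult)
    then show "integrable M1 (\<lambda>x. \<integral>y. norm ((\<lambda>(x,y). \<bar>g1 x\<bar> * \<bar>g2 y\<bar>) (x,y)) \<partial>M2)"
      using g1 by simp
    show "AE x in M1. integrable M2 (\<lambda>y. (\<lambda>(x,y). \<bar>g1 x\<bar> * \<bar>g2 y\<bar>) (x,y))"
      using g2 by simp
  qed
  show "AE x in M1 \<Otimes>\<^sub>M M2. norm (F x) \<le> norm ((\<lambda>(x,y). \<bar>g1 x\<bar> * \<bar>g2 y\<bar>) x)"
  proof (rule AE_I2)
    fix p assume "p \<in> space (M1 \<Otimes>\<^sub>M M2)"
    then obtain x y where p: "p = (x,y)" "x \<in> space M1" "y \<in> space M2"
      by (auto simp: space_pair_measure)
    have "g1 x * g2 y \<le> \<bar>g1 x\<bar> * \<bar>g2 y\<bar>" by (metis abs_ge_self abs_mult)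
    then show "norm (F p) \<le> norm ((\<lambda>(x,y). \<bar>g1 x\<bar> * \<bar>g2 y\<bar>) p)"
      using b[OF p(2,3)] p(1) by simp
  qed
qed (fact Fm)

lemma fubini_iexp:
  fixes W h :: "real \<Rightarrow> complex"
  assumes W: "integrable lborel W" and h: "integrable lborel h"
  shows "(\<integral>\<omega>. W \<omega> * (\<integral>x. iexp (s*\<omega>*x) * h x \<partial>lborel) \<partial>lborel)
       = (\<integral>x. h x * (\<integral>\<omega>. iexp (s*\<omega>*x) * W \<omega> \<partial>lborel) \<partial>lborel)"
proof -
  have [measurable]: "W \<in> borel_measurable borel" "h \<in> borel_measurable borel"
    using W h by auto
  let ?F = "\<lambda>\<omega> x. W \<omega> * iexp (s*\<omega>*x) * h x"
  have int: "integrable (lborel \<Otimes>\<^sub>M lborel) (case_prod ?F)"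
  proof (rule lborel_pair.integrable_pair_bound[of "case_prod ?F" "\<lambda>\<omega>. norm (W \<omega>)" "\<lambda>x. norm (h x)"])
    show "case_prod ?F \<in> borel_measurable (lborel \<Otimes>\<^sub>M lborel)" by measurable
  qed (use W h in \<open>auto simp: norm_mult\<close>)
  have "(\<integral>x. (\<integral>\<omega>. ?F \<omega> x \<partial>lborel) \<partial>lborel) = (\<integral>\<omega>. (\<integral>x. ?F \<omega> x \<partial>lborel) \<partial>lborel)"
    using lborel_pair.Fubini_integral[OF int] .
  moreover have e1: "(\<integral>\<omega>. ?F \<omega> x \<partial>lborel) = h x * (\<integral>\<omega>. iexp (s*\<omega>*x) * W \<omega> \<partial>lborel)" for x
  proof -
    have "(\<integral>\<omega>. ?F \<omega> x \<partial>lborel) = (\<integral>\<omega>. h x * (iexp (s*\<omega>*x) * W \<omega>) \<partial>lborel)"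
      by (rule Bochner_Integration.integral_cong) (simp_all add: mult_ac)
    then show ?thesis by simp
  qed
  moreover have e2: "(\<integral>x. ?F \<omega> x \<partial>lborel) = W \<omega> * (\<integral>x. iexp (s*\<omega>*x) * h x \<partial>lborel)" for \<omega>
  proof -
    have "(\<integral>x. ?F \<omega> x \<partial>lborel) = (\<integral>x. W \<omega> * (iexp (s*\<omega>*x) * h x) \<partial>lborel)"
      by (rule Bochner_Integration.integral_cong) (simp_all add: mult_ac)
    then show ?thesis by simp
  qed
  ultimately have "(\<integral>x. h x * (\<integral>\<omega>. iexp (s*\<omega>*x) * W \<omega> \<partial>lborel) \<partial>lborel) = (\<integral>\<omega>. W \<omega> * (\<integral>x. iexp (s*\<omega>*x) * h x \<partial>lborel) \<partial>lborel)"
    by (simp only: e1 e2)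
  then show ?thesis by (rule sym)
qed



lemma bounded_C0:
  fixes h :: "real \<Rightarrow> 'b::real_normed_vector"
  assumes c: "continuous_on UNIV h" and t: "(h \<longlongrightarrow> 0) at_infinity"
  shows "\<exists>B. \<forall>x. norm (h x) \<le> B"
proof -
  have "eventually (\<lambda>x. dist (h x) 0 < 1) at_infinity"
    using t by (rule tendstoD) simp
  then obtain b where b: "\<And>x. b \<le> norm x \<Longrightarrow> norm (h x) < 1"
    by (auto simp: eventually_at_infinity)
  have "compact (h ` cball 0 b)"
    by (rule compact_continuous_image[OF continuous_on_subset[OF c] compact_cball]) auto
  then obtain B' where B': "\<And>y. y \<in> h ` cball 0 b \<Longrightarrow> norm y \<le> B'"
    by (meson bounded_iff compact_imp_bounded)
  have "norm (h x) \<le> max 1 B'" for x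
  proof (cases "b \<le> norm x")
    case True then show ?thesis using b[of x] by simp
  next
    case False then have "x \<in> cball 0 b" by simp
    then show ?thesis using B'[of "h x"] by simp
  qed
  then show ?thesis by blast
qed

lemma C0_1_facts:
  assumes "C0_1 f"
  shows "continuous_on UNIV f" "f \<in> borel_measurable borel"
    "\<exists>B. \<forall>x. \<bar>f x\<bar> \<le> B" "\<exists>L. 0 \<le> L \<and> (\<forall>a b. \<bar>f a - f b\<bar> \<le> L * \<bar>a - b\<bar>)"
proof -
  obtain f' where d: "\<And>x. (f has_real_derivative f' x) (at x)" and c': "continuous_on UNIV f'"
    and t: "(f \<longlongrightarrow> 0) at_infinity" and t': "(f' \<longlongrightarrow> 0) at_infinity"
    using assms unfolding C0_1_def by blast
  show c: "continuous_on UNIV f"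
    using d by (meson DERIV_isCont continuous_at_imp_continuous_on)
  then show "f \<in> borel_measurable borel" by (rule borel_measurable_continuous_onI)
  show "\<exists>B. \<forall>x. \<bar>f x\<bar> \<le> B" using bounded_C0[OF c t] by simp
  obtain L where L: "\<And>x. \<bar>f' x\<bar> \<le> L" using bounded_C0[OF c' t'] by auto
  have L0: "0 \<le> L" using L[of 0] by simp
  have lip: "\<bar>f a - f b\<bar> \<le> L * \<bar>a - b\<bar>" if ba: "b < a" for a b
  proof -
    obtain z where "f a - f b = (a - b) * f' z"
      using MVT2[OF ba, of f f'] d by blast
    then have "\<bar>f a - f b\<bar> = \<bar>a - b\<bar> * \<bar>f' z\<bar>" by (simp add: abs_mult)
    also have "\<dots> \<le> \<bar>a - b\<bar> * L" by (rule mult_left_mono[OF L]) simp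
    finally show ?thesis by (simp add: mult.commute)
  qed
  have "\<bar>f a - f b\<bar> \<le> L * \<bar>a - b\<bar>" for a b
  proof (cases a b rule: linorder_cases)
    case less then show ?thesis using lip[of a b] by (simp add: abs_minus_commute)
  next
    case greater then show ?thesis using lip[of b a] by (simp add: abs_minus_commute)
  qed simp
  then show "\<exists>L. 0 \<le> L \<and> (\<forall>a b. \<bar>f a - f b\<bar> \<le> L * \<bar>a - b\<bar>)" using L0 by blast
qed

lemma density_facts:
  assumes P: "prob_space M" and d: "distributed M lborel V (\<lambda>v. ennreal (fV v))"
    and nn: "\<forall>v. 0 \<le> fV v"
  shows "integrable lborel fV" "(\<integral>v. fV v \<partial>lborel) = 1"
proof -
  interpret prob_space M by fact
  have "integrable lborel (\<lambda>x. fV x * 1) \<longleftrightarrow> integrable M (\<lambda>x. (1::real))"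
    by (rule distributed_integrable[OF d]) (use nn in auto)
  then show "integrable lborel fV" by simp
  have "(\<integral>x. fV x * 1 \<partial>lborel) = (\<integral>x. (1::real) \<partial>M)"
    by (rule distributed_integral[OF d]) (use nn in auto)
  then show "(\<integral>v. fV v \<partial>lborel) = 1" by (simp add: prob_space)
qed

lemma char_density:
  assumes P: "prob_space M" and d: "distributed M lborel V (\<lambda>v. ennreal (fV v))"
    and nn: "\<forall>v. 0 \<le> fV v" and fm: "fV \<in> borel_measurable borel"
  shows "char (distr M borel V) \<theta> = (\<integral>v. iexp (\<theta> * v) * complex_of_real (fV v) \<partial>lborel)"
proof -
  have "distr M borel V = distr M lborel V"
    by (rule distr_cong) auto
  also have "\<dots> = density lborel (\<lambda>v. ennreal (fV v))"
    using d by (simp add: distributed_def)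
  finally have e: "distr M borel V = density lborel (\<lambda>v. ennreal (fV v))" .
  have "char (distr M borel V) \<theta> = (\<integral>v. iexp (\<theta> * v) \<partial>density lborel (\<lambda>v. ennreal (fV v)))"
    unfolding char_def e ..
  also have "\<dots> = (\<integral>v. fV v *\<^sub>R iexp (\<theta> * v) \<partial>lborel)"
    by (rule integral_density) (use nn fm in auto)
  also have "\<dots> = (\<integral>v. iexp (\<theta> * v) * complex_of_real (fV v) \<partial>lborel)"
    by (simp add: scaleR_conv_of_real mult.commute)
  finally show ?thesis .
qed



locale pset =
  fixes fV :: "real \<Rightarrow> real" and B L :: real
  assumes nn: "\<And>v. 0 \<le> fV v" and fm[measurable]: "fV \<in> borel_measurable borel"
   and fint: "integrable lborel fV" and fone: "(\<integral>v. fV v \<partial>lborel) = 1"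
   and fB: "\<And>x. \<bar>fV x\<bar> \<le> B" and fL: "\<And>a b. \<bar>fV a - fV b\<bar> \<le> L * \<bar>a - b\<bar>" and L0: "0 \<le> L"
   and fc: "continuous_on UNIV fV"
begin

definition Conv :: "real \<Rightarrow> real \<Rightarrow> real" where
  "Conv e b = (\<integral>v. fV v * Pk e (b - v) \<partial>lborel)"

lemma B0: "0 \<le> B" using fB[of 0] nn[of 0] by simp

lemma Conv_alt: "Conv e b = (\<integral>w. fV (b - w) * Pk e w \<partial>lborel)"
proof -
  have "Conv e b = \<bar>-1\<bar> *\<^sub>R (\<integral>w. fV (b + (-1) * w) * Pk e (b - (b + (-1) * w)) \<partial>lborel)"
    unfolding Conv_def by (rule lborel_integral_real_affine) simp
  then show ?thesis by simp
qed

lemma int_fV_Pk: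
  assumes e: "0 < e" shows "integrable lborel (\<lambda>w. fV (b - w) * Pk e w)"
proof (rule Bochner_Integration.integrable_bound[OF integrable_mult_right[OF Pk_integral(1)[OF e], of B]])
  show "AE x in lborel. norm (fV (b - x) * Pk e x) \<le> norm (B * Pk e x)"
    using fB Pk_nonneg[OF e] B0 by (auto simp: abs_mult intro!: mult_right_mono)
qed measurable

lemma Conv_bound: assumes e: "0 < e" shows "\<bar>Conv e b\<bar> \<le> B"
proof -
  have "\<bar>Conv e b\<bar> \<le> (\<integral>w. B * Pk e w \<partial>lborel)"
    unfolding Conv_alt
    apply (rule order_trans[OF integral_abs_bound])
    apply (rule integral_mono[OF _ integrable_mult_right[OF Pk_integral(1)[OF e]]])
    using int_fV_Pk[OF e] apply simp
    using fB Pk_nonneg[OF e] by (auto simp: abs_mult intro!: mult_right_mono)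
  also have "\<dots> = B" using Pk_integral(2)[OF e] by simp
  finally show ?thesis .
qed

lemma fL_shift: "\<bar>fV (b1 - w) - fV (b2 - w)\<bar> \<le> L * \<bar>b1 - b2\<bar>"
  using fL[of "b1 - w" "b2 - w"] by simp

lemma Conv_lip: assumes e: "0 < e" shows "\<bar>Conv e b1 - Conv e b2\<bar> \<le> L * \<bar>b1 - b2\<bar>"
proof -
  have "Conv e b1 - Conv e b2 = (\<integral>w. (fV (b1 - w) - fV (b2 - w)) * Pk e w \<partial>lborel)"
    unfolding Conv_alt using int_fV_Pk[OF e] by (simp add: left_diff_distrib)
  also have "\<bar>\<dots>\<bar> \<le> (\<integral>w. (L * \<bar>b1 - b2\<bar>) * Pk e w \<partial>lborel)"
    apply (rule order_trans[OF integral_abs_bound])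
    apply (rule integral_mono[OF _ integrable_mult_right[OF Pk_integral(1)[OF e]]])
    using int_fV_Pk[OF e] apply (simp add: left_diff_distrib)
    using fL_shift Pk_nonneg[OF e] by (auto simp: abs_mult intro!: mult_right_mono)
  also have "\<dots> = L * \<bar>b1 - b2\<bar>" using Pk_integral(2)[OF e] by simp
  finally show ?thesis .
qed

lemma Conv_lim:
  assumes ep: "\<And>n. 0 < e n" and el: "e \<longlonglongrightarrow> 0"
  shows "(\<lambda>n. Conv (e n) b) \<longlonglongrightarrow> fV b"
proof -
  have "(\<lambda>n. \<integral>x. Pk (e n) (x - b) *\<^sub>R fV x \<partial>lborel) \<longlonglongrightarrow> fV b"
    by (rule Pk_approx[OF fm _ _ ep el]) (use fB fc in \<open>auto simp: continuous_on_eq_continuous_at\<close>)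
  moreover have "Conv (e n) b = (\<integral>x. Pk (e n) (x - b) *\<^sub>R fV x \<partial>lborel)" for n
    unfolding Conv_def using Pk_even[of "e n" "x - b" for x] by (simp add: mult.commute)
  ultimately show ?thesis by simp
qed

end



lemma iexp_add: "iexp a * iexp b = iexp (a + b)"
  by (simp add: exp_add[symmetric] distrib_left)

lemma Pk_2pi: "2 * pi * Pk e u = 2 * e / (e^2 + u^2)"
  by (simp add: Pk_def add.commute)

context pset begin

definition phi :: "real \<Rightarrow> complex" where
  "phi \<omega> = (\<integral>v. iexp (\<omega> * v) * complex_of_real (fV v) \<partial>lborel)"

lemma phi_meas[measurable]: "phi \<in> borel_measurable borel"
  unfolding phi_def by measurable

lemma int_cfV: "integrable lborel (\<lambda>v. complex_of_real (fV v))"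
  using fint by simp

lemma phi_bound: "norm (phi \<omega>) \<le> 1"
proof -
  have "norm (phi \<omega>) \<le> (\<integral>v. norm (iexp (\<omega> * v) * complex_of_real (fV v)) \<partial>lborel)"
    unfolding phi_def by (rule integral_norm_bound)
  also have "\<dots> = (\<integral>v. fV v \<partial>lborel)"
    using nn by (simp add: norm_mult)
  finally show ?thesis using fone by simp
qed

lemma phi_neg: "phi (-\<omega>) = (\<integral>v. iexp ((-1) * \<omega> * v) * complex_of_real (fV v) \<partial>lborel)"
  unfolding phi_def by simp

lemma G_integral:
  assumes e: "0 < e"
  shows "integrable lborel (\<lambda>\<omega>. iexp (\<omega> * b) * complex_of_real (exp (-(e*\<bar>\<omega>\<bar>))) * phi (-\<omega>))"
    "(\<integral>\<omega>. iexp (\<omega> * b) * complex_of_real (exp (-(e*\<bar>\<omega>\<bar>))) * phi (-\<omega>) \<partial>lborel)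
       = complex_of_real (2 * pi * Conv e b)"
proof -
  let ?W = "\<lambda>\<omega>. iexp (\<omega> * b) * complex_of_real (exp (-(e*\<bar>\<omega>\<bar>)))"
  have iW: "integrable lborel ?W" using ft_exp_abs(1)[OF e] .
  show "integrable lborel (\<lambda>\<omega>. iexp (\<omega> * b) * complex_of_real (exp (-(e*\<bar>\<omega>\<bar>))) * phi (-\<omega>))"
    apply (rule Bochner_Integration.integrable_bound[OF integrable_exp_abs[OF e]])
     apply measurable
    using phi_bound by (auto simp: norm_mult intro!: mult_left_le)
  have "(\<integral>\<omega>. ?W \<omega> * phi (-\<omega>) \<partial>lborel)
      = (\<integral>\<omega>. ?W \<omega> * (\<integral>v. iexp ((-1) * \<omega> * v) * complex_of_real (fV v) \<partial>lborel) \<partial>lborel)"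
    by (simp only: phi_neg)
  also have "\<dots> = (\<integral>v. complex_of_real (fV v) * (\<integral>\<omega>. iexp ((-1) * \<omega> * v) * ?W \<omega> \<partial>lborel) \<partial>lborel)"
    by (rule fubini_iexp[OF iW int_cfV])
  also have "\<dots> = (\<integral>v. complex_of_real (fV v) * complex_of_real (2*e/(e^2+(b - v)^2)) \<partial>lborel)"
  proof (rule Bochner_Integration.integral_cong[OF refl])
    fix v
    have "(\<integral>\<omega>. iexp ((-1) * \<omega> * v) * ?W \<omega> \<partial>lborel) = (\<integral>\<omega>. iexp (\<omega> * (b - v)) * complex_of_real (exp (-(e*\<bar>\<omega>\<bar>))) \<partial>lborel)"
    proof (rule Bochner_Integration.integral_cong[OF refl])
      fix \<omega>
      have "iexp ((-1) * \<omega> * v) * iexp (\<omega> * b) = iexp (\<omega> * (b - v))"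
        by (subst iexp_add, rule arg_cong[where f=iexp]) (simp add: algebra_simps)
      then show "iexp ((-1) * \<omega> * v) * ?W \<omega> = iexp (\<omega> * (b - v)) * complex_of_real (exp (-(e*\<bar>\<omega>\<bar>)))"
        by (metis mult.assoc)
    qed
    also have "\<dots> = complex_of_real (2*e/(e^2+(b - v)^2))" by (rule ft_exp_abs(2)[OF e])
    finally show "complex_of_real (fV v) * (\<integral>\<omega>. iexp ((-1) * \<omega> * v) * ?W \<omega> \<partial>lborel) = complex_of_real (fV v) * complex_of_real (2*e/(e^2+(b - v)^2))"
      by simp
  qed
  also have "\<dots> = complex_of_real (\<integral>v. fV v * (2*e/(e^2+(b - v)^2)) \<partial>lborel)"
    by (simp only: of_real_mult[symmetric] integral_complex_of_real)
  also have "(\<integral>v. fV v * (2*e/(e^2+(b - v)^2)) \<partial>lborel) = 2 * pi * Conv e b"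
  proof -
    have "(\<integral>v. fV v * (2*e/(e^2+(b - v)^2)) \<partial>lborel) = (\<integral>v. (2 * pi) * (fV v * Pk e (b - v)) \<partial>lborel)"
      by (rule Bochner_Integration.integral_cong[OF refl]) (simp only: Pk_2pi[symmetric], simp add: mult_ac)
    then show ?thesis unfolding Conv_def by simp
  qed
  finally show "(\<integral>\<omega>. iexp (\<omega> * b) * complex_of_real (exp (-(e*\<bar>\<omega>\<bar>))) * phi (-\<omega>) \<partial>lborel)
       = complex_of_real (2 * pi * Conv e b)" .
qed

definition Cq :: "real \<Rightarrow> real \<Rightarrow> real" where
  "Cq e a = (\<integral>v. fV v * ((a - v) / (e^2 + (a - v)^2)) \<partial>lborel)"

lemma T1_integral:
  assumes e: "0 < e"
  shows "integrable lborel (\<lambda>\<omega>. iexp (\<omega> * a) * complex_of_real (exp (-(e*\<bar>\<omega>\<bar>)) * sgn \<omega>) * phi (-\<omega>))"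
    "(\<integral>\<omega>. iexp (\<omega> * a) * complex_of_real (exp (-(e*\<bar>\<omega>\<bar>)) * sgn \<omega>) * phi (-\<omega>) \<partial>lborel)
       = \<i> * complex_of_real (2 * Cq e a)"
proof -
  let ?W = "\<lambda>\<omega>. iexp (\<omega> * a) * complex_of_real (exp (-(e*\<bar>\<omega>\<bar>)) * sgn \<omega>)"
  have iW: "integrable lborel ?W" using ft_exp_abs_sgn(1)[OF e] .
  show "integrable lborel (\<lambda>\<omega>. iexp (\<omega> * a) * complex_of_real (exp (-(e*\<bar>\<omega>\<bar>)) * sgn \<omega>) * phi (-\<omega>))"
    apply (rule Bochner_Integration.integrable_bound[OF integrable_exp_abs[OF e]])
     apply measurable
    using phi_bound by (auto simp: norm_mult abs_sgn sgn_if intro!: mult_left_le)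
  have "(\<integral>\<omega>. ?W \<omega> * phi (-\<omega>) \<partial>lborel)
      = (\<integral>\<omega>. ?W \<omega> * (\<integral>v. iexp ((-1) * \<omega> * v) * complex_of_real (fV v) \<partial>lborel) \<partial>lborel)"
    by (simp only: phi_neg)
  also have "\<dots> = (\<integral>v. complex_of_real (fV v) * (\<integral>\<omega>. iexp ((-1) * \<omega> * v) * ?W \<omega> \<partial>lborel) \<partial>lborel)"
    by (rule fubini_iexp[OF iW int_cfV])
  also have "\<dots> = (\<integral>v. complex_of_real (fV v) * (\<i> * complex_of_real (2*(a - v)/(e^2+(a - v)^2))) \<partial>lborel)"
  proof (rule Bochner_Integration.integral_cong[OF refl])
    fix v
    have "(\<integral>\<omega>. iexp ((-1) * \<omega> * v) * ?W \<omega> \<partial>lborel) = (\<integral>\<omega>. iexp (\<omega> * (a - v)) * complex_of_real (exp (-(e*\<bar>\<omega>\<bar>)) * sgn \<omega>) \<partial>lborel)"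
    proof (rule Bochner_Integration.integral_cong[OF refl])
      fix \<omega>
      have "iexp ((-1) * \<omega> * v) * iexp (\<omega> * a) = iexp (\<omega> * (a - v))"
        by (subst iexp_add, rule arg_cong[where f=iexp]) (simp add: algebra_simps)
      then show "iexp ((-1) * \<omega> * v) * ?W \<omega> = iexp (\<omega> * (a - v)) * complex_of_real (exp (-(e*\<bar>\<omega>\<bar>)) * sgn \<omega>)"
        by (metis mult.assoc)
    qed
    also have "\<dots> = \<i> * complex_of_real (2*(a - v)/(e^2+(a - v)^2))" by (rule ft_exp_abs_sgn(2)[OF e])
    finally show "complex_of_real (fV v) * (\<integral>\<omega>. iexp ((-1) * \<omega> * v) * ?W \<omega> \<partial>lborel) = complex_of_real (fV v) * (\<i> * complex_of_real (2*(a - v)/(e^2+(a - v)^2)))"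
      by simp
  qed
  also have "\<dots> = (\<integral>v. \<i> * complex_of_real (2 * (fV v * ((a - v)/(e^2+(a - v)^2)))) \<partial>lborel)"
    by (rule Bochner_Integration.integral_cong[OF refl]) (simp add: field_simps)
  also have "\<dots> = \<i> * complex_of_real (2 * Cq e a)"
    unfolding Cq_def by (simp only: integral_mult_right_zero integral_complex_of_real)
  finally show "(\<integral>\<omega>. iexp (\<omega> * a) * complex_of_real (exp (-(e*\<bar>\<omega>\<bar>)) * sgn \<omega>) * phi (-\<omega>) \<partial>lborel)
       = \<i> * complex_of_real (2 * Cq e a)" .
qed

end


lemma norm_iexp_diff: "norm (iexp (-x) - iexp x) \<le> 2 * \<bar>x\<bar>" "norm (iexp (-x) - iexp x) \<le> 2"
proof -
  have "iexp (-x) - iexp x = - (\<i> * complex_of_real (2 * sin x))"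
    using iexp_diff[of x] by (simp add: algebra_simps)
  then have n: "norm (iexp (-x) - iexp x) = 2 * \<bar>sin x\<bar>"
    by (simp only: norm_minus_cancel norm_mult) (simp add: abs_mult)
  show "norm (iexp (-x) - iexp x) \<le> 2 * \<bar>x\<bar>" using n abs_sin_x_le_abs_x[of x] by simp
  show "norm (iexp (-x) - iexp x) \<le> 2" using n abs_sin_le_one[of x] by simp
qed

lemma exp_abs_poly_bound:
  fixes e w :: real
  assumes e: "0 < e"
  shows "exp (-(e*\<bar>w\<bar>)) * (\<bar>w\<bar> + 1) \<le> (2/e + 1) * exp (-((e/2)*\<bar>w\<bar>))"
proof -
  have h: "e*\<bar>w\<bar>/2 \<le> exp (e*\<bar>w\<bar>/2)"
    using exp_ge_add_one_self[of "e*\<bar>w\<bar>/2"] by linarith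
  have "\<bar>w\<bar> = (2/e) * (e*\<bar>w\<bar>/2)" using e by simp
  also have "\<dots> \<le> (2/e) * exp (e*\<bar>w\<bar>/2)" using h e by (intro mult_left_mono) auto
  finally have "\<bar>w\<bar> \<le> (2/e) * exp (e*\<bar>w\<bar>/2)" .
  then have "exp (-(e*\<bar>w\<bar>)) * \<bar>w\<bar> \<le> exp (-(e*\<bar>w\<bar>)) * ((2/e) * exp (e*\<bar>w\<bar>/2))"
    by (rule mult_left_mono) simp
  also have "exp (-(e*\<bar>w\<bar>)) * ((2/e) * exp (e*\<bar>w\<bar>/2)) = (2/e) * (exp (-(e*\<bar>w\<bar>)) * exp (e*\<bar>w\<bar>/2))"
    by simp
  also have "exp (-(e*\<bar>w\<bar>)) * exp (e*\<bar>w\<bar>/2) = exp (-((e/2)*\<bar>w\<bar>))"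
    by (simp add: exp_add[symmetric])
  finally have a: "exp (-(e*\<bar>w\<bar>)) * \<bar>w\<bar> \<le> (2/e) * exp (-((e/2)*\<bar>w\<bar>))" .
  have b: "exp (-(e*\<bar>w\<bar>)) \<le> exp (-((e/2)*\<bar>w\<bar>))" using e by (simp add: mult_right_mono)
  have "exp (-(e*\<bar>w\<bar>)) * (\<bar>w\<bar> + 1) = exp (-(e*\<bar>w\<bar>)) * \<bar>w\<bar> + exp (-(e*\<bar>w\<bar>))"
    by (simp add: distrib_left)
  also have "\<dots> \<le> (2/e) * exp (-((e/2)*\<bar>w\<bar>)) + exp (-((e/2)*\<bar>w\<bar>))" using a b by (rule add_mono)
  also have "\<dots> = (2/e+1) * exp (-((e/2)*\<bar>w\<bar>))" by (simp add: distrib_right)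
  finally show ?thesis .
qed

locale psetk = pset +
  fixes k :: "real \<Rightarrow> complex"
  assumes km: "set_borel_measurable lborel {0<..} k"
    and k1: "set_integrable lborel {0<..1} (\<lambda>t. t * cmod (k t))"
    and k2: "set_integrable lborel {1..} (\<lambda>t. cmod (k t))"
begin

definition bk :: "real \<Rightarrow> real" where
  "bk t = indicator {0<..1} t * (t * cmod (k t)) + indicator {1..} t * cmod (k t)"

lemma kk_meas[measurable]: "(\<lambda>t. indicator {0<..} t *\<^sub>R k t) \<in> borel_measurable borel"
  using km unfolding set_borel_measurable_def by simp

lemma bk_int: "integrable lborel bk"
  using k1 k2 unfolding bk_def set_integrable_def by (simp add: mult.commute)

lemma bk_bound:
  assumes "0 < t" shows "min t 1 * cmod (k t) \<le> bk t"
proof (cases "t \<le> 1")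
  case True then show ?thesis using assms by (auto simp: bk_def indicator_def min_def)
next
  case False then show ?thesis using assms by (auto simp: bk_def indicator_def min_def)
qed

lemma bk_nonneg: "0 \<le> bk t" by (auto simp: bk_def indicator_def)

definition A2 :: "real \<Rightarrow> complex" where
  "A2 \<omega> = (LINT t:{0<..}|lborel. (iexp (- \<omega> * t) - iexp (\<omega> * t)) * k t)"

definition Dq :: "real \<Rightarrow> real \<Rightarrow> complex" where
  "Dq e a = (LINT t:{0<..}|lborel. complex_of_real (Conv e (a - t) - Conv e (a + t)) * k t)"

lemma F_bound:
  assumes e: "0 < e"
  shows "norm (iexp (\<omega> * a) * complex_of_real (exp (-(e*\<bar>\<omega>\<bar>))) * phi (-\<omega>) *
           (indicator {0<..} t *\<^sub>R ((iexp (- \<omega> * t) - iexp (\<omega> * t)) * k t)))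
         \<le> (2 * (2/e + 1) * exp (-((e/2)*\<bar>\<omega>\<bar>))) * bk t"
proof (cases "0 < t")
  case False
  have "0 \<le> (2 * (2/e + 1) * exp (-((e/2)*\<bar>\<omega>\<bar>))) * bk t"
    using e bk_nonneg[of t] by (intro mult_nonneg_nonneg) auto
  then show ?thesis using False by (simp add: indicator_def)
next
  case True
  have d: "norm (iexp (- \<omega> * t) - iexp (\<omega> * t)) \<le> 2 * min (\<bar>\<omega>\<bar> * t) 1"
    using norm_iexp_diff[of "\<omega> * t"] True by (simp add: abs_mult min_def)
  have m: "min (\<bar>\<omega>\<bar> * t) 1 \<le> (\<bar>\<omega>\<bar> + 1) * min t 1"
    using True by (auto simp: min_def algebra_simps intro: mult_left_le order_trans[of _ "\<bar>\<omega>\<bar> * t"])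
  have "norm (iexp (\<omega> * a) * complex_of_real (exp (-(e*\<bar>\<omega>\<bar>))) * phi (-\<omega>) *
           (indicator {0<..} t *\<^sub>R ((iexp (- \<omega> * t) - iexp (\<omega> * t)) * k t)))
      = exp (-(e*\<bar>\<omega>\<bar>)) * norm (phi (-\<omega>)) * (norm (iexp (- \<omega> * t) - iexp (\<omega> * t)) * cmod (k t))"
    using True by (simp add: norm_mult)
  also have "\<dots> \<le> exp (-(e*\<bar>\<omega>\<bar>)) * 1 * ((2 * ((\<bar>\<omega>\<bar> + 1) * min t 1)) * cmod (k t))"
    apply (intro mult_mono phi_bound order_trans[OF d] mult_left_mono m)
    using True by (auto intro!: mult_nonneg_nonneg)
  also have "\<dots> = 2 * (exp (-(e*\<bar>\<omega>\<bar>)) * (\<bar>\<omega>\<bar> + 1)) * (min t 1 * cmod (k t))"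
    by (simp add: mult_ac)
  also have "\<dots> \<le> 2 * ((2/e + 1) * exp (-((e/2)*\<bar>\<omega>\<bar>))) * bk t"
  proof (rule mult_mono)
    show "2 * (exp (-(e*\<bar>\<omega>\<bar>)) * (\<bar>\<omega>\<bar> + 1)) \<le> 2 * ((2/e + 1) * exp (-((e/2)*\<bar>\<omega>\<bar>)))"
      using exp_abs_poly_bound[OF e, of \<omega>] by simp
    show "min t 1 * cmod (k t) \<le> bk t" by (rule bk_bound[OF True])
    show "0 \<le> 2 * ((2/e + 1) * exp (-((e/2)*\<bar>\<omega>\<bar>)))" using e by (auto intro!: mult_nonneg_nonneg)
    show "0 \<le> min t 1 * cmod (k t)" using True by auto
  qed
  finally show ?thesis by (simp only: mult.assoc)
qed

lemma T2_integral:
  assumes e: "0 < e"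
  shows "integrable lborel (\<lambda>\<omega>. iexp (\<omega> * a) * complex_of_real (exp (-(e*\<bar>\<omega>\<bar>))) * phi (-\<omega>) * A2 \<omega>)"
    "(\<integral>\<omega>. iexp (\<omega> * a) * complex_of_real (exp (-(e*\<bar>\<omega>\<bar>))) * phi (-\<omega>) * A2 \<omega> \<partial>lborel)
       = complex_of_real (2 * pi) * Dq e a"
proof -
  let ?H = "\<lambda>\<omega>. iexp (\<omega> * a) * complex_of_real (exp (-(e*\<bar>\<omega>\<bar>))) * phi (-\<omega>)"
  let ?F = "\<lambda>\<omega> t. ?H \<omega> * (indicator {0<..} t *\<^sub>R ((iexp (- \<omega> * t) - iexp (\<omega> * t)) * k t))"
  have e2: "0 < e/2" using e by simp
  have int: "integrable (lborel \<Otimes>\<^sub>M lborel) (case_prod ?F)"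
  proof (rule lborel_pair.integrable_pair_bound[of "case_prod ?F" "\<lambda>\<omega>. 2 * (2/e + 1) * exp (-((e/2)*\<bar>\<omega>\<bar>))" bk])
    have [measurable]: "(\<lambda>(\<omega>, t). indicator {0<..} t *\<^sub>R k t) \<in> borel_measurable (lborel \<Otimes>\<^sub>M lborel)"
      by measurable
    have eq: "case_prod ?F = (\<lambda>(\<omega>, t). ?H \<omega> * ((iexp (- \<omega> * t) - iexp (\<omega> * t)) * (indicator {0<..} t *\<^sub>R k t)))"
      by (auto simp: fun_eq_iff indicator_def)
    show "case_prod ?F \<in> borel_measurable (lborel \<Otimes>\<^sub>M lborel)"
      unfolding eq by measurable
    show "integrable lborel (\<lambda>\<omega>. 2 * (2/e + 1) * exp (-((e/2)*\<bar>\<omega>\<bar>)))"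
      using integrable_exp_abs[OF e2] by simp
  qed (use bk_int F_bound[OF e] in auto)
  have fst: "(\<integral>t. ?F \<omega> t \<partial>lborel) = ?H \<omega> * A2 \<omega>" for \<omega>
    unfolding A2_def set_lebesgue_integral_def by (rule integral_mult_right_zero)
  have "integrable lborel (\<lambda>\<omega>. \<integral>t. ?F \<omega> t \<partial>lborel)"
    using lborel_pair.integrable_fst'[OF int] by (simp only: case_prod_conv)
  then have iH: "integrable lborel (\<lambda>\<omega>. ?H \<omega> * A2 \<omega>)"
    unfolding fst .
  then show "integrable lborel (\<lambda>\<omega>. iexp (\<omega> * a) * complex_of_real (exp (-(e*\<bar>\<omega>\<bar>))) * phi (-\<omega>) * A2 \<omega>)" .
  have snd: "(\<integral>\<omega>. ?F \<omega> t \<partial>lborel) = complex_of_real (2 * pi) *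
      (indicator {0<..} t *\<^sub>R (complex_of_real (Conv e (a - t) - Conv e (a + t)) * k t))" for t
  proof -
    have pw: "?F \<omega> t = (indicator {0<..} t *\<^sub>R k t) *
        (iexp (\<omega> * (a - t)) * complex_of_real (exp (-(e*\<bar>\<omega>\<bar>))) * phi (-\<omega>)
         - iexp (\<omega> * (a + t)) * complex_of_real (exp (-(e*\<bar>\<omega>\<bar>))) * phi (-\<omega>))" for \<omega>
    proof -
      have 1: "iexp (\<omega> * a) * iexp (- \<omega> * t) = iexp (\<omega> * (a - t))"
        by (subst iexp_add, rule arg_cong[where f=iexp]) (simp add: algebra_simps)
      have 2: "iexp (\<omega> * a) * iexp (\<omega> * t) = iexp (\<omega> * (a + t))"
        by (subst iexp_add, rule arg_cong[where f=iexp]) (simp add: algebra_simps)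
      have "?F \<omega> t = (indicator {0<..} t *\<^sub>R k t) *
        ((iexp (\<omega> * a) * iexp (- \<omega> * t)) * complex_of_real (exp (-(e*\<bar>\<omega>\<bar>))) * phi (-\<omega>)
         - (iexp (\<omega> * a) * iexp (\<omega> * t)) * complex_of_real (exp (-(e*\<bar>\<omega>\<bar>))) * phi (-\<omega>))"
        unfolding scaleR_conv_of_real by algebra
      then show ?thesis by (simp only: 1 2)
    qed
    have "(\<integral>\<omega>. ?F \<omega> t \<partial>lborel) = (indicator {0<..} t *\<^sub>R k t) *
        ((\<integral>\<omega>. iexp (\<omega> * (a - t)) * complex_of_real (exp (-(e*\<bar>\<omega>\<bar>))) * phi (-\<omega>) \<partial>lborel)
         - (\<integral>\<omega>. iexp (\<omega> * (a + t)) * complex_of_real (exp (-(e*\<bar>\<omega>\<bar>))) * phi (-\<omega>) \<partial>lborel))"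
    proof -
      have "(\<integral>\<omega>. ?F \<omega> t \<partial>lborel) = (\<integral>\<omega>. (indicator {0<..} t *\<^sub>R k t) *
        (iexp (\<omega> * (a - t)) * complex_of_real (exp (-(e*\<bar>\<omega>\<bar>))) * phi (-\<omega>)
         - iexp (\<omega> * (a + t)) * complex_of_real (exp (-(e*\<bar>\<omega>\<bar>))) * phi (-\<omega>)) \<partial>lborel)"
        by (rule Bochner_Integration.integral_cong[OF refl]) (rule pw)
      also have "\<dots> = (indicator {0<..} t *\<^sub>R k t) * (\<integral>\<omega>.
        (iexp (\<omega> * (a - t)) * complex_of_real (exp (-(e*\<bar>\<omega>\<bar>))) * phi (-\<omega>)
         - iexp (\<omega> * (a + t)) * complex_of_real (exp (-(e*\<bar>\<omega>\<bar>))) * phi (-\<omega>)) \<partial>lborel)"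
        by (rule integral_mult_right_zero)
      also have "(\<integral>\<omega>.
        (iexp (\<omega> * (a - t)) * complex_of_real (exp (-(e*\<bar>\<omega>\<bar>))) * phi (-\<omega>)
         - iexp (\<omega> * (a + t)) * complex_of_real (exp (-(e*\<bar>\<omega>\<bar>))) * phi (-\<omega>)) \<partial>lborel)
        = (\<integral>\<omega>. iexp (\<omega> * (a - t)) * complex_of_real (exp (-(e*\<bar>\<omega>\<bar>))) * phi (-\<omega>) \<partial>lborel)
         - (\<integral>\<omega>. iexp (\<omega> * (a + t)) * complex_of_real (exp (-(e*\<bar>\<omega>\<bar>))) * phi (-\<omega>) \<partial>lborel)"
        by (rule Bochner_Integration.integral_diff[OF G_integral(1)[OF e] G_integral(1)[OF e]])
      finally show ?thesis .
    qed
    also have "\<dots> = (indicator {0<..} t *\<^sub>R k t) * (complex_of_real (2 * pi * Conv e (a - t)) - complex_of_real (2 * pi * Conv e (a + t)))"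
      by (simp only: G_integral(2)[OF e])
    also have "\<dots> = complex_of_real (2 * pi) *
      (indicator {0<..} t *\<^sub>R (complex_of_real (Conv e (a - t) - Conv e (a + t)) * k t))"
      by (simp add: algebra_simps)
    finally show ?thesis .
  qed
  have "(\<integral>\<omega>. ?H \<omega> * A2 \<omega> \<partial>lborel) = (\<integral>\<omega>. (\<integral>t. ?F \<omega> t \<partial>lborel) \<partial>lborel)"
    by (simp only: fst)
  also have "\<dots> = (\<integral>t. (\<integral>\<omega>. ?F \<omega> t \<partial>lborel) \<partial>lborel)"
    using lborel_pair.Fubini_integral[OF int] by simp
  also have "\<dots> = complex_of_real (2 * pi) * Dq e a"
    unfolding snd Dq_def set_lebesgue_integral_def by (rule integral_mult_right_zero)
  finally show "(\<integral>\<omega>. iexp (\<omega> * a) * complex_of_real (exp (-(e*\<bar>\<omega>\<bar>))) * phi (-\<omega>) * A2 \<omega> \<partial>lborel)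
       = complex_of_real (2 * pi) * Dq e a" .
qed

end


context pset begin

definition Hf :: "real \<Rightarrow> real" where
  "Hf a = (LINT s:{0<..}|lborel. (fV (a - s) - fV (a + s)) / s)"

lemma int_fV_shift: "integrable lborel (\<lambda>s. fV (a + c * s))" if "c \<noteq> 0"
  using lborel_integrable_real_affine[OF fint that, of a] .

lemma int_fV_minus: "integrable lborel (\<lambda>s. fV (a - s))"
  using int_fV_shift[of "-1" a] by simp
lemma int_fV_plus: "integrable lborel (\<lambda>s. fV (a + s))"
  using int_fV_shift[of 1 a] by simp

lemma quot_bound: fixes e s :: real assumes e: "0 < e" shows "\<bar>s / (e^2 + s^2)\<bar> \<le> 1 / e"
proof -
  have p: "0 < e^2 + s^2" using e by (intro add_pos_nonneg) auto
  have aux: "t * e \<le> e^2 + t^2" if t: "0 \<le> t" for t :: real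
  proof -
    have "(e - t)^2 = e^2 + t^2 - 2 * (t * e)" by (simp add: power2_eq_square algebra_simps)
    moreover have "0 \<le> (e - t)^2" by simp
    moreover have "0 \<le> t * e" using e t by simp
    ultimately show ?thesis by linarith
  qed
  have h: "\<bar>s\<bar> * e \<le> 1 * (e^2 + s^2)" using aux[of "\<bar>s\<bar>"] by simp
  have "\<bar>s / (e^2 + s^2)\<bar> = \<bar>s\<bar> / (e^2 + s^2)" using p by (simp add: abs_div)
  also have "\<dots> \<le> 1 / e" using h p e by (simp add: frac_le_eq divide_le_eq le_divide_eq)
  finally show ?thesis .
qed

lemma Hf_bound_fun:
  assumes "0 < s"
  shows "\<bar>(fV (a - s) - fV (a + s)) / s\<bar> \<le> indicator {0<..1} s * (2 * L) + indicator {1..} s * (fV (a - s) + fV (a + s))"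
proof (cases "s \<le> 1")
  case True
  have "\<bar>fV (a - s) - fV (a + s)\<bar> \<le> L * \<bar>(a - s) - (a + s)\<bar>" by (rule fL)
  then have "\<bar>fV (a - s) - fV (a + s)\<bar> \<le> 2 * L * s" using assms by simp
  then have "\<bar>(fV (a - s) - fV (a + s)) / s\<bar> \<le> 2 * L" using assms by (simp add: abs_div divide_le_eq mult.commute)
  then show ?thesis using True assms nn[of "a-s"] nn[of "a+s"] by (auto simp: indicator_def)
next
  case False
  have "\<bar>(fV (a - s) - fV (a + s)) / s\<bar> \<le> \<bar>fV (a - s) - fV (a + s)\<bar>"
    using False mult_left_mono[of 1 s "\<bar>fV (a - s) - fV (a + s)\<bar>"] by (simp add: abs_div divide_le_eq)
  also have "\<dots> \<le> fV (a - s) + fV (a + s)" using nn[of "a-s"] nn[of "a+s"] by simp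
  finally show ?thesis using False L0 by (auto simp: indicator_def)
qed

lemma Hf_bound_int: "integrable lborel (\<lambda>s. indicator {0<..1} s * (2 * L) + indicator {1..} s * (fV (a - s) + fV (a + s)))"
proof (rule Bochner_Integration.integrable_add)
  show "integrable lborel (\<lambda>s::real. indicator {0<..1} s * (2 * L))"
    by (intro integrable_mult_left integrable_real_indicator) simp_all
  have "integrable lborel (\<lambda>s. fV (a - s) + fV (a + s))" using int_fV_minus int_fV_plus by simp
  then show "integrable lborel (\<lambda>s. indicator {1..} s * (fV (a - s) + fV (a + s)))"
    using integrable_mult_indicator[of "{1..}" lborel "\<lambda>s. fV (a - s) + fV (a + s)"] by simp
qed

lemma Cq_alt:
  assumes e: "0 < e"
  shows "Cq e a = (LINT s:{0<..}|lborel. (fV (a - s) - fV (a + s)) * (s / (e^2 + s^2)))"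
proof -
  let ?G = "\<lambda>s. fV (a - s) * (s / (e^2 + s^2))"
  have "Cq e a = \<bar>-1\<bar> *\<^sub>R (\<integral>s. fV (a + (-1) * s) * ((a - (a + (-1) * s)) / (e^2 + (a - (a + (-1) * s))^2)) \<partial>lborel)"
    unfolding Cq_def by (rule lborel_integral_real_affine) simp
  also have "\<dots> = (\<integral>s. ?G s \<partial>lborel)" by simp
  finally have c: "Cq e a = (\<integral>s. ?G s \<partial>lborel)" .
  have iG: "integrable lborel ?G"
  proof (rule Bochner_Integration.integrable_bound[OF integrable_mult_right[OF int_fV_minus, of "1/e"]])
    show "AE x in lborel. norm (?G x) \<le> norm (1/e * fV (a - x))"
    proof (rule AE_I2)
      fix x
      have "norm (?G x) = fV (a - x) * \<bar>x / (e^2 + x^2)\<bar>" using nn[of "a - x"] by (simp add: abs_mult)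
      also have "\<dots> \<le> fV (a - x) * (1 / e)" by (rule mult_left_mono[OF quot_bound[OF e] nn])
      also have "\<dots> = norm (1/e * fV (a - x))" using e nn[of "a - x"] by simp
      finally show "norm (?G x) \<le> norm (1/e * fV (a - x))" .
    qed
  qed measurable
  have a1: "set_integrable lborel {0<..} ?G" using iG unfolding set_integrable_def
    by (intro integrable_mult_indicator) auto
  have "integrable lborel (\<lambda>s. ?G (0 + (-1) * s))" using lborel_integrable_real_affine[OF iG, of "-1" 0] by simp
  then have a2: "set_integrable lborel {0<..} (\<lambda>s. ?G (-s))" unfolding set_integrable_def
    by (intro integrable_mult_indicator) auto
  have "(\<integral>s. ?G s \<partial>lborel) = (LINT s:{0<..}|lborel. ?G s + ?G (-s))"
    using integral_split0(2)[OF a1 a2] .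
  also have "\<dots> = (LINT s:{0<..}|lborel. (fV (a - s) - fV (a + s)) * (s / (e^2 + s^2)))"
    by (rule set_lebesgue_integral_cong) (auto simp: algebra_simps diff_divide_distrib)
  finally show ?thesis using c by simp
qed

lemma Cq_lim:
  assumes ep: "\<And>n. 0 < e n" and el: "e \<longlonglongrightarrow> 0"
  shows "(\<lambda>n. Cq (e n) a) \<longlonglongrightarrow> Hf a"
    "set_integrable lborel {0<..} (\<lambda>s. (fV (a - s) - fV (a + s)) / s)"
proof -
  let ?w = "\<lambda>s. indicator {0<..1} s * (2 * L) + indicator {1..} s * (fV (a - s) + fV (a + s))"
  let ?f = "\<lambda>s. indicator {0<..} s * ((fV (a - s) - fV (a + s)) / s)"
  let ?s = "\<lambda>n s. indicator {0<..} s * ((fV (a - s) - fV (a + s)) * (s / ((e n)^2 + s^2)))"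
  have lim: "AE s in lborel. (\<lambda>n. ?s n s) \<longlonglongrightarrow> ?f s"
  proof (rule AE_I2)
    fix s :: real
    show "(\<lambda>n. ?s n s) \<longlonglongrightarrow> ?f s"
    proof (cases "0 < s")
      case True
      have "(\<lambda>n. s / ((e n)^2 + s^2)) \<longlonglongrightarrow> s / (0^2 + s^2)"
        using True by (intro tendsto_intros el) simp
      then have "(\<lambda>n. s / ((e n)^2 + s^2)) \<longlonglongrightarrow> 1 / s"
        using True by (simp add: power2_eq_square)
      then show ?thesis using True by (auto intro!: tendsto_intros simp: divide_inverse)
    qed simp
  qed
  have bnd: "AE s in lborel. norm (?s n s) \<le> ?w s" for n
  proof (rule AE_I2)
    fix s :: real
    show "norm (?s n s) \<le> ?w s"
    proof (cases "0 < s")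
      case True
      have "s / ((e n)^2 + s^2) \<le> s / s^2"
      proof (rule divide_left_mono)
        have "0 < (e n)^2 + s^2" using True by (intro add_nonneg_pos) auto
        moreover have "0 < s^2" using True by simp
        ultimately show "0 < ((e n)^2 + s^2) * s^2" by (rule mult_pos_pos)
      qed (use True in auto)
      then have q: "s / ((e n)^2 + s^2) \<le> 1 / s" using True by (simp add: power2_eq_square)
      have q0: "0 \<le> s / ((e n)^2 + s^2)" using True by (simp add: add_pos_nonneg less_imp_le)
      have "norm (?s n s) = \<bar>fV (a - s) - fV (a + s)\<bar> * (s / ((e n)^2 + s^2))"
        using True q0 by (simp add: abs_mult)
      also have "\<dots> \<le> \<bar>fV (a - s) - fV (a + s)\<bar> * (1 / s)" by (rule mult_left_mono[OF q]) simp
      also have "\<dots> = \<bar>(fV (a - s) - fV (a + s)) / s\<bar>" using True by (simp add: abs_div)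
      also have "\<dots> \<le> ?w s" by (rule Hf_bound_fun[OF True])
      finally show ?thesis .
    next
      case False
      then show ?thesis using L0 nn[of "a-s"] nn[of "a+s"] by (auto simp: indicator_def)
    qed
  qed
  have "(\<lambda>n. \<integral>s. ?s n s \<partial>lborel) \<longlonglongrightarrow> (\<integral>s. ?f s \<partial>lborel)"
    by (rule integral_dominated_convergence[OF _ _ Hf_bound_int lim bnd]) measurable
  moreover have "Cq (e n) a = (\<integral>s. ?s n s \<partial>lborel)" for n
    unfolding Cq_alt[OF ep[of n]] set_lebesgue_integral_def by simp
  moreover have "Hf a = (\<integral>s. ?f s \<partial>lborel)"
    unfolding Hf_def set_lebesgue_integral_def by simp
  ultimately show "(\<lambda>n. Cq (e n) a) \<longlonglongrightarrow> Hf a" by simp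
  have "integrable lborel ?f"
    by (rule integrable_dominated_convergence[OF _ _ Hf_bound_int lim bnd]) measurable
  then show "set_integrable lborel {0<..} (\<lambda>s. (fV (a - s) - fV (a + s)) / s)"
    unfolding set_integrable_def by simp
qed

end

context psetk begin

definition Kf :: "real \<Rightarrow> complex" where
  "Kf a = (LINT t:{0<..}|lborel. complex_of_real (fV (a - t) - fV (a + t)) * k t)"

lemma Conv_meas[measurable]: "Conv e \<in> borel_measurable borel"
  unfolding Conv_def by measurable

lemma Dq_lim:
  assumes ep: "\<And>n. 0 < e n" and el: "e \<longlonglongrightarrow> 0"
  shows "(\<lambda>n. Dq (e n) a) \<longlonglongrightarrow> Kf a"
proof -
  let ?w = "\<lambda>t. (2 * L + 2 * B) * bk t"
  let ?f = "\<lambda>t. complex_of_real (fV (a - t) - fV (a + t)) * (indicator {0<..} t *\<^sub>R k t)"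
  let ?s = "\<lambda>n t. complex_of_real (Conv (e n) (a - t) - Conv (e n) (a + t)) * (indicator {0<..} t *\<^sub>R k t)"
  have lim: "AE t in lborel. (\<lambda>n. ?s n t) \<longlonglongrightarrow> ?f t"
    by (intro AE_I2 tendsto_intros Conv_lim[OF ep el])
  have bnd: "AE t in lborel. norm (?s n t) \<le> ?w t" for n
  proof (rule AE_I2)
    fix t :: real
    show "norm (?s n t) \<le> ?w t"
    proof (cases "0 < t")
      case True
      have c1: "\<bar>Conv (e n) (a - t) - Conv (e n) (a + t)\<bar> \<le> 2 * L * t"
        using Conv_lip[OF ep[of n], of "a - t" "a + t"] True by simp
      have c2: "\<bar>Conv (e n) (a - t) - Conv (e n) (a + t)\<bar> \<le> 2 * B"
        using Conv_bound[OF ep[of n], of "a - t"] Conv_bound[OF ep[of n], of "a + t"] by simp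
      have c: "\<bar>Conv (e n) (a - t) - Conv (e n) (a + t)\<bar> \<le> (2 * L + 2 * B) * min t 1"
      proof (cases "t \<le> 1")
        case tt: True
        have "2 * L * t \<le> (2 * L + 2 * B) * t" using B0 True by (simp add: algebra_simps)
        then show ?thesis using c1 tt by (simp add: min_def)
      next
        case False
        then show ?thesis using c2 L0 by (simp add: min_def)
      qed
      have "norm (?s n t) = \<bar>Conv (e n) (a - t) - Conv (e n) (a + t)\<bar> * cmod (k t)"
        using True by (simp add: norm_mult del: of_real_diff flip: of_real_diff)
      also have "\<dots> \<le> (2 * L + 2 * B) * min t 1 * cmod (k t)" by (rule mult_right_mono[OF c]) simp
      also have "\<dots> \<le> (2 * L + 2 * B) * bk t"
        using bk_bound[OF True] L0 B0 by (simp add: mult.assoc mult_left_mono)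
      finally show ?thesis .
    next
      case False then show ?thesis using L0 B0 bk_nonneg[of t] by simp
    qed
  qed
  have iw: "integrable lborel ?w" using bk_int by simp
  have "(\<lambda>n. \<integral>t. ?s n t \<partial>lborel) \<longlonglongrightarrow> (\<integral>t. ?f t \<partial>lborel)"
    by (rule integral_dominated_convergence[OF _ _ iw lim bnd]) measurable
  moreover have "Dq (e n) a = (\<integral>t. ?s n t \<partial>lborel)" for n
    unfolding Dq_def set_lebesgue_integral_def
    by (rule Bochner_Integration.integral_cong) (simp_all add: mult_ac scaleR_conv_of_real)
  moreover have "Kf a = (\<integral>t. ?f t \<partial>lborel)"
    unfolding Kf_def set_lebesgue_integral_def
    by (rule Bochner_Integration.integral_cong) (simp_all add: mult_ac scaleR_conv_of_real)
  ultimately show ?thesis by simp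
qed

end


locale pkey = psetk +
  fixes l :: "real \<Rightarrow> complex" and Bl :: real and c :: complex and y :: real
  assumes lc: "continuous_on UNIV l" and lb: "\<And>x. norm (l x) \<le> Bl" and li: "integrable lborel l"
    and hyp: "AE \<omega> in lborel. fourier l \<omega> = iexp (\<omega> * y) *
        (- \<i> * complex_of_real pi * c * complex_of_real (sgn \<omega>) + A2 \<omega>) * phi (-\<omega>)"
    and fi: "integrable lborel (fourier l)"
begin

lemma approx_identity:
  assumes e: "0 < e"
  shows "(\<integral>x. Pk e (x - z) *\<^sub>R l x \<partial>lborel) = c * complex_of_real (Cq e (y - z)) + Dq e (y - z)"
proof -
  define a where "a = y - z"
  let ?E = "\<lambda>\<omega>. complex_of_real (exp (-(e*\<bar>\<omega>\<bar>)))"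
  let ?W = "\<lambda>\<omega>. iexp (\<omega> * (-z)) * ?E \<omega>"
  let ?T1 = "\<lambda>\<omega>. iexp (\<omega> * a) * complex_of_real (exp (-(e*\<bar>\<omega>\<bar>)) * sgn \<omega>) * phi (-\<omega>)"
  let ?T2 = "\<lambda>\<omega>. iexp (\<omega> * a) * ?E \<omega> * phi (-\<omega>) * A2 \<omega>"
  let ?R = "\<lambda>\<omega>. (- \<i> * complex_of_real pi * c) * ?T1 \<omega> + ?T2 \<omega>"
  have lm[measurable]: "l \<in> borel_measurable borel" using li by auto
  have fm[measurable]: "fourier l \<in> borel_measurable borel" using fi by auto
  have iW: "integrable lborel ?W" using ft_exp_abs(1)[OF e, of "-z"] .
  have "(\<integral>\<omega>. ?W \<omega> * fourier l \<omega> \<partial>lborel) = (\<integral>\<omega>. ?W \<omega> * (\<integral>x. iexp (1 * \<omega> * x) * l x \<partial>lborel) \<partial>lborel)"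
    by (simp add: fourier_def)
  also have "\<dots> = (\<integral>x. l x * (\<integral>\<omega>. iexp (1 * \<omega> * x) * ?W \<omega> \<partial>lborel) \<partial>lborel)"
    by (rule fubini_iexp[OF iW li])
  also have "\<dots> = (\<integral>x. l x * complex_of_real (2 * pi * Pk e (x - z)) \<partial>lborel)"
  proof (rule Bochner_Integration.integral_cong[OF refl])
    fix x
    have "(\<integral>\<omega>. iexp (1 * \<omega> * x) * ?W \<omega> \<partial>lborel) = (\<integral>\<omega>. iexp (\<omega> * (x - z)) * ?E \<omega> \<partial>lborel)"
    proof (rule Bochner_Integration.integral_cong[OF refl])
      fix \<omega>
      have "iexp (1 * \<omega> * x) * iexp (\<omega> * (-z)) = iexp (\<omega> * (x - z))"
        by (subst iexp_add, rule arg_cong[where f=iexp]) (simp add: algebra_simps)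
      then show "iexp (1 * \<omega> * x) * ?W \<omega> = iexp (\<omega> * (x - z)) * ?E \<omega>"
        by (metis mult.assoc)
    qed
    also have "\<dots> = complex_of_real (2 * e / (e^2 + (x - z)^2))" by (rule ft_exp_abs(2)[OF e])
    also have "\<dots> = complex_of_real (2 * pi * Pk e (x - z))" by (simp only: Pk_2pi)
    finally show "l x * (\<integral>\<omega>. iexp (1 * \<omega> * x) * ?W \<omega> \<partial>lborel) = l x * complex_of_real (2 * pi * Pk e (x - z))"
      by simp
  qed
  also have "\<dots> = complex_of_real (2 * pi) * (\<integral>x. Pk e (x - z) *\<^sub>R l x \<partial>lborel)"
  proof -
    have "(\<integral>x. l x * complex_of_real (2 * pi * Pk e (x - z)) \<partial>lborel) = (\<integral>x. complex_of_real (2 * pi) * (Pk e (x - z) *\<^sub>R l x) \<partial>lborel)"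
      by (rule Bochner_Integration.integral_cong[OF refl]) (simp add: scaleR_conv_of_real mult_ac)
    then show ?thesis by (simp only: integral_mult_right_zero)
  qed
  finally have s1: "(\<integral>\<omega>. ?W \<omega> * fourier l \<omega> \<partial>lborel) = complex_of_real (2 * pi) * (\<integral>x. Pk e (x - z) *\<^sub>R l x \<partial>lborel)" .
  have iT1: "integrable lborel ?T1" using T1_integral(1)[OF e] .
  have iT2: "integrable lborel ?T2" using T2_integral(1)[OF e] .
  have iR: "integrable lborel ?R" using iT1 iT2 by simp
  have ea: "iexp (\<omega> * a) = iexp (\<omega> * (-z)) * iexp (\<omega> * y)" for \<omega>
    by (subst iexp_add, rule arg_cong[where f=iexp]) (simp add: a_def algebra_simps)
  have "AE \<omega> in lborel. ?W \<omega> * fourier l \<omega> = ?R \<omega>"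
    using hyp
  proof eventually_elim
    fix \<omega> assume h: "fourier l \<omega> = iexp (\<omega> * y) *
        (- \<i> * complex_of_real pi * c * complex_of_real (sgn \<omega>) + A2 \<omega>) * phi (-\<omega>)"
    show "?W \<omega> * fourier l \<omega> = ?R \<omega>"
      unfolding h ea unfolding of_real_mult by algebra
  qed
  then have s2: "(\<integral>\<omega>. ?W \<omega> * fourier l \<omega> \<partial>lborel) = (\<integral>\<omega>. ?R \<omega> \<partial>lborel)"
    by (rule integral_cong_AE[rotated 2]) (use iR in auto)
  have "(\<integral>\<omega>. ?R \<omega> \<partial>lborel) = (- \<i> * complex_of_real pi * c) * (\<integral>\<omega>. ?T1 \<omega> \<partial>lborel) + (\<integral>\<omega>. ?T2 \<omega> \<partial>lborel)"
    using iT1 iT2 by simp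
  also have "\<dots> = (- \<i> * complex_of_real pi * c) * (\<i> * complex_of_real (2 * Cq e a)) + complex_of_real (2 * pi) * Dq e a"
    by (simp only: T1_integral(2)[OF e] T2_integral(2)[OF e])
  also have "\<dots> = complex_of_real (2 * pi) * (c * complex_of_real (Cq e a) + Dq e a)"
    by (simp add: algebra_simps)
  finally have "complex_of_real (2 * pi) * (\<integral>x. Pk e (x - z) *\<^sub>R l x \<partial>lborel) = complex_of_real (2 * pi) * (c * complex_of_real (Cq e a) + Dq e a)"
    using s1 s2 by simp
  then show ?thesis by (simp add: a_def)
qed

lemma key:
  shows "l z = c * complex_of_real (Hf (y - z)) + Kf (y - z)"
proof -
  define e where "e n = inverse (real (Suc n))" for n
  have ep: "\<And>n. 0 < e n" by (simp add: e_def)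
  have el: "e \<longlonglongrightarrow> 0" unfolding e_def by (rule LIMSEQ_inverse_real_of_nat)
  have "(\<lambda>n. \<integral>x. Pk (e n) (x - z) *\<^sub>R l x \<partial>lborel) \<longlonglongrightarrow> l z"
    by (rule Pk_approx[OF _ lb _ ep el]) (use li lc in \<open>auto simp: continuous_on_eq_continuous_at\<close>)
  moreover have "(\<lambda>n. \<integral>x. Pk (e n) (x - z) *\<^sub>R l x \<partial>lborel) \<longlonglongrightarrow> c * complex_of_real (Hf (y - z)) + Kf (y - z)"
    unfolding approx_identity[OF ep]
    by (intro tendsto_intros Cq_lim[OF ep el] Dq_lim[OF ep el])
  ultimately show ?thesis by (rule LIMSEQ_unique)
qed

end


context pset begin

lemma conv_int_z:
  assumes fmu: "finite_measure \<mu>" and sb: "sets \<mu> = sets borel"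
  shows "integrable \<mu> (\<lambda>z. fV (x - z))"
proof -
  interpret finite_measure \<mu> by fact
  have m: "(\<lambda>z. fV (x - z)) \<in> borel_measurable \<mu>"
    by (subst measurable_cong_sets[OF sb refl]) measurable
  show ?thesis
    by (rule integrable_const_bound[where B=B]) (use fB m in auto)
qed

lemma outer_fubini:
  fixes w :: "real \<Rightarrow> 'b::{banach, second_countable_topology}"
  assumes fmu: "finite_measure \<mu>" and sb: "sets \<mu> = sets borel"
    and wm: "(\<lambda>s. indicator {0<..} s *\<^sub>R w s) \<in> borel_measurable borel"
    and wi: "\<And>a. integrable lborel (\<lambda>s. indicator {0<..} s *\<^sub>R ((fV (a - s) - fV (a + s)) *\<^sub>R w s))"
    and wb: "\<And>a. (\<integral>s. norm (indicator {0<..} s *\<^sub>R ((fV (a - s) - fV (a + s)) *\<^sub>R w s)) \<partial>lborel) \<le> C"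
  shows "integrable \<mu> (\<lambda>z. LINT s:{0<..}|lborel. (fV (y - z - s) - fV (y - z + s)) *\<^sub>R w s)"
    "set_integrable lborel {0<..} (\<lambda>s. (conv_meas fV \<mu> (y - s) - conv_meas fV \<mu> (y + s)) *\<^sub>R w s)"
    "(LINT s:{0<..}|lborel. (conv_meas fV \<mu> (y - s) - conv_meas fV \<mu> (y + s)) *\<^sub>R w s)
      = (\<integral>z. (LINT s:{0<..}|lborel. (fV (y - z - s) - fV (y - z + s)) *\<^sub>R w s) \<partial>\<mu>)"
proof -
  interpret mu: finite_measure \<mu> by fact
  interpret P: pair_sigma_finite \<mu> lborel by unfold_locales
  let ?P = "\<lambda>z s. indicator {0<..} s *\<^sub>R ((fV (y - z - s) - fV (y - z + s)) *\<^sub>R w s)"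
  have Ssets: "sets (\<mu> \<Otimes>\<^sub>M lborel) = sets (borel \<Otimes>\<^sub>M borel)"
    by (rule sets_pair_measure_cong) (simp_all add: sb)
  have eqP: "case_prod ?P = (\<lambda>(z, s). (fV (y - z - s) - fV (y - z + s)) *\<^sub>R (indicator {0<..} s *\<^sub>R w s))"
    by (auto simp: fun_eq_iff)
  have mP: "case_prod ?P \<in> borel_measurable (\<mu> \<Otimes>\<^sub>M lborel)"
    unfolding measurable_cong_sets[OF Ssets refl] eqP using wm by measurable
  have mN: "(\<lambda>z. \<integral>s. norm (?P z s) \<partial>lborel) \<in> borel_measurable \<mu>"
  proof -
    have "(\<lambda>(z,s). norm (?P z s)) \<in> borel_measurable (\<mu> \<Otimes>\<^sub>M lborel)"
      using mP by measurable
    then show ?thesis by measurable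
  qed
  have int: "integrable (\<mu> \<Otimes>\<^sub>M lborel) (case_prod ?P)"
  proof (rule P.Fubini_integrable[OF mP])
    show "integrable \<mu> (\<lambda>z. \<integral>s. norm (case_prod ?P (z, s)) \<partial>lborel)"
    proof (rule mu.integrable_const_bound[where B=C])
      show "AE z in \<mu>. norm (\<integral>s. norm (case_prod ?P (z, s)) \<partial>lborel) \<le> C"
      proof (rule AE_I2)
        fix z
        have "norm (\<integral>s. norm (?P z s) \<partial>lborel) = (\<integral>s. norm (?P z s) \<partial>lborel)"
          by (simp add: integral_nonneg_AE)
        also have "\<dots> \<le> C" using wb[of "y - z"] by simp
        finally show "norm (\<integral>s. norm (case_prod ?P (z, s)) \<partial>lborel) \<le> C" by simp
      qed
    qed (use mN in simp)
    show "AE z in \<mu>. integrable lborel (\<lambda>s. case_prod ?P (z, s))"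
      using wi by simp
  qed
  show "integrable \<mu> (\<lambda>z. LINT s:{0<..}|lborel. (fV (y - z - s) - fV (y - z + s)) *\<^sub>R w s)"
    using P.integrable_fst'[OF int] unfolding set_lebesgue_integral_def by simp
  have snd: "(\<integral>z. ?P z s \<partial>\<mu>) = indicator {0<..} s *\<^sub>R ((conv_meas fV \<mu> (y - s) - conv_meas fV \<mu> (y + s)) *\<^sub>R w s)" for s
  proof -
    have i1: "integrable \<mu> (\<lambda>z. fV (y - z - s))" using conv_int_z[OF fmu sb, of "y - s"] by (simp add: algebra_simps)
    have i2: "integrable \<mu> (\<lambda>z. fV (y - z + s))" using conv_int_z[OF fmu sb, of "y + s"] by (simp add: algebra_simps)
    have "(\<integral>z. ?P z s \<partial>\<mu>) = (\<integral>z. (indicator {0<..} s * (fV (y - z - s) - fV (y - z + s))) *\<^sub>R w s \<partial>\<mu>)"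
      by simp
    also have "\<dots> = (\<integral>z. indicator {0<..} s * (fV (y - z - s) - fV (y - z + s)) \<partial>\<mu>) *\<^sub>R w s"
      by (rule integral_scaleR_left) (use i1 i2 in simp)
    also have "\<dots> = indicator {0<..} s *\<^sub>R ((\<integral>z. fV (y - z - s) - fV (y - z + s) \<partial>\<mu>) *\<^sub>R w s)"
      by simp
    also have "(\<integral>z. fV (y - z - s) - fV (y - z + s) \<partial>\<mu>) = conv_meas fV \<mu> (y - s) - conv_meas fV \<mu> (y + s)"
      using i1 i2 unfolding conv_meas_def by (simp add: algebra_simps)
    finally show ?thesis .
  qed
  have swap: "integrable (lborel \<Otimes>\<^sub>M \<mu>) (\<lambda>(s, z). ?P z s)"
    using P.integrable_product_swap[OF int] by simp
  interpret Q: pair_sigma_finite lborel \<mu> by unfold_locales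
  have "integrable lborel (\<lambda>s. \<integral>z. ?P z s \<partial>\<mu>)"
    using Q.integrable_fst'[OF swap] by simp
  then show "set_integrable lborel {0<..} (\<lambda>s. (conv_meas fV \<mu> (y - s) - conv_meas fV \<mu> (y + s)) *\<^sub>R w s)"
    unfolding snd set_integrable_def .
  have "(\<integral>s. (\<integral>z. ?P z s \<partial>\<mu>) \<partial>lborel) = (\<integral>z. (\<integral>s. ?P z s \<partial>lborel) \<partial>\<mu>)"
    using P.Fubini_integral[OF int] .
  then show "(LINT s:{0<..}|lborel. (conv_meas fV \<mu> (y - s) - conv_meas fV \<mu> (y + s)) *\<^sub>R w s)
      = (\<integral>z. (LINT s:{0<..}|lborel. (fV (y - z - s) - fV (y - z + s)) *\<^sub>R w s) \<partial>\<mu>)"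
    unfolding snd set_lebesgue_integral_def .
qed

end


context pset begin

lemma int_shift_one: "(\<integral>s. fV (a - s) \<partial>lborel) = 1" "(\<integral>s. fV (a + s) \<partial>lborel) = 1"
proof -
  have "(\<integral>v. fV v \<partial>lborel) = \<bar>-1\<bar> *\<^sub>R (\<integral>s. fV (a + (-1) * s) \<partial>lborel)"
    by (rule lborel_integral_real_affine) simp
  then show "(\<integral>s. fV (a - s) \<partial>lborel) = 1" using fone by simp
  have "(\<integral>v. fV v \<partial>lborel) = \<bar>1\<bar> *\<^sub>R (\<integral>s. fV (a + 1 * s) \<partial>lborel)"
    by (rule lborel_integral_real_affine) simp
  then show "(\<integral>s. fV (a + s) \<partial>lborel) = 1" using fone by simp
qed

lemma Hw_int: "integrable lborel (\<lambda>s. indicator {0<..} s *\<^sub>R ((fV (a - s) - fV (a + s)) *\<^sub>R (1 / s)))"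
proof (rule Bochner_Integration.integrable_bound[OF Hf_bound_int[of a]])
  show "AE s in lborel. norm (indicator {0<..} s *\<^sub>R ((fV (a - s) - fV (a + s)) *\<^sub>R (1 / s)))
      \<le> norm (indicator {0<..1} s * (2 * L) + indicator {1..} s * (fV (a - s) + fV (a + s)))"
  proof (rule AE_I2)
    fix s :: real
    show "norm (indicator {0<..} s *\<^sub>R ((fV (a - s) - fV (a + s)) *\<^sub>R (1 / s)))
      \<le> norm (indicator {0<..1} s * (2 * L) + indicator {1..} s * (fV (a - s) + fV (a + s)))"
    proof (cases "0 < s")
      case True
      then show ?thesis using Hf_bound_fun[OF True, of a] by (simp add: divide_inverse mult.commute)
    qed simp
  qed
qed measurable

lemma Hw_bound: "(\<integral>s. norm (indicator {0<..} s *\<^sub>R ((fV (a - s) - fV (a + s)) *\<^sub>R (1 / s))) \<partial>lborel) \<le> 2 * L + 2"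
proof -
  let ?b = "\<lambda>s. indicator {0<..1} s * (2 * L) + indicator {1..} s * (fV (a - s) + fV (a + s))"
  have "(\<integral>s. norm (indicator {0<..} s *\<^sub>R ((fV (a - s) - fV (a + s)) *\<^sub>R (1 / s))) \<partial>lborel) \<le> (\<integral>s. ?b s \<partial>lborel)"
  proof (rule integral_mono)
    show "integrable lborel (\<lambda>s. norm (indicator {0<..} s *\<^sub>R ((fV (a - s) - fV (a + s)) *\<^sub>R (1 / s))))"
      by (rule integrable_norm[OF Hw_int])
    show "integrable lborel ?b" by (rule Hf_bound_int)
    fix s :: real
    show "norm (indicator {0<..} s *\<^sub>R ((fV (a - s) - fV (a + s)) *\<^sub>R (1 / s))) \<le> ?b s"
    proof (cases "0 < s")
      case True
      then show ?thesis using Hf_bound_fun[OF True, of a] by (simp add: divide_inverse mult.commute)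
    qed (use L0 nn in \<open>auto simp: indicator_def\<close>)
  qed
  also have "(\<integral>s. ?b s \<partial>lborel) \<le> (\<integral>s. indicator {0<..1} s * (2 * L) + (fV (a - s) + fV (a + s)) \<partial>lborel)"
  proof (rule integral_mono)
    show "integrable lborel ?b" by (rule Hf_bound_int)
    show "integrable lborel (\<lambda>s. indicator {0<..1} s * (2 * L) + (fV (a - s) + fV (a + s)))"
      using int_fV_minus[of a] int_fV_plus[of a]
      by (intro Bochner_Integration.integrable_add integrable_mult_left integrable_real_indicator) simp_all
    fix s :: real show "?b s \<le> indicator {0<..1} s * (2 * L) + (fV (a - s) + fV (a + s))"
      using nn[of "a - s"] nn[of "a + s"] by (auto simp: indicator_def)
  qed
  also have "\<dots> = 2 * L + 2"
    using int_fV_minus[of a] int_fV_plus[of a] int_shift_one[of a]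
    by (subst Bochner_Integration.integral_add) (simp_all add: integrable_real_indicator)
  finally show ?thesis .
qed

end

context psetk begin

lemma Kw_pt: "norm (indicator {0<..} s *\<^sub>R ((fV (a - s) - fV (a + s)) *\<^sub>R k s)) \<le> (2 * L + 2 * B) * bk s"
proof (cases "0 < s")
  case True
  have c1: "\<bar>fV (a - s) - fV (a + s)\<bar> \<le> 2 * L * s" using fL[of "a - s" "a + s"] True by simp
  have c2: "\<bar>fV (a - s) - fV (a + s)\<bar> \<le> 2 * B" using fB[of "a - s"] fB[of "a + s"] by simp
  have c: "\<bar>fV (a - s) - fV (a + s)\<bar> \<le> (2 * L + 2 * B) * min s 1"
  proof (cases "s \<le> 1")
    case tt: True
    have "2 * L * s \<le> (2 * L + 2 * B) * s" using B0 True by (simp add: algebra_simps)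
    then show ?thesis using c1 tt by (simp add: min_def)
  next
    case False
    then show ?thesis using c2 L0 by (simp add: min_def)
  qed
  have "norm (indicator {0<..} s *\<^sub>R ((fV (a - s) - fV (a + s)) *\<^sub>R k s)) = \<bar>fV (a - s) - fV (a + s)\<bar> * cmod (k s)"
    using True by simp
  also have "\<dots> \<le> (2 * L + 2 * B) * min s 1 * cmod (k s)" by (rule mult_right_mono[OF c]) simp
  also have "\<dots> \<le> (2 * L + 2 * B) * bk s"
    using bk_bound[OF True] L0 B0 by (simp add: mult.assoc mult_left_mono)
  finally show ?thesis .
next
  case False then show ?thesis using L0 B0 bk_nonneg[of s] by simp
qed

lemma Kw_int: "integrable lborel (\<lambda>s. indicator {0<..} s *\<^sub>R ((fV (a - s) - fV (a + s)) *\<^sub>R k s))"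
proof (rule Bochner_Integration.integrable_bound[OF integrable_mult_right[OF bk_int, of "2 * L + 2 * B"]])
  show "(\<lambda>s. indicator {0<..} s *\<^sub>R ((fV (a - s) - fV (a + s)) *\<^sub>R k s)) \<in> borel_measurable lborel"
  proof -
    have "(\<lambda>s. indicator {0<..} s *\<^sub>R ((fV (a - s) - fV (a + s)) *\<^sub>R k s)) = (\<lambda>s. (fV (a - s) - fV (a + s)) *\<^sub>R (indicator {0<..} s *\<^sub>R k s))"
      by (auto simp: fun_eq_iff)
    then show ?thesis by (simp only:) measurable
  qed
  show "AE s in lborel. norm (indicator {0<..} s *\<^sub>R ((fV (a - s) - fV (a + s)) *\<^sub>R k s)) \<le> norm ((2 * L + 2 * B) * bk s)"
    using Kw_pt L0 B0 bk_nonneg by (auto intro: order_trans)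
qed

lemma Kw_bound: "(\<integral>s. norm (indicator {0<..} s *\<^sub>R ((fV (a - s) - fV (a + s)) *\<^sub>R k s)) \<partial>lborel) \<le> (2 * L + 2 * B) * (\<integral>s. bk s \<partial>lborel)"
proof -
  have "(\<integral>s. norm (indicator {0<..} s *\<^sub>R ((fV (a - s) - fV (a + s)) *\<^sub>R k s)) \<partial>lborel) \<le> (\<integral>s. (2 * L + 2 * B) * bk s \<partial>lborel)"
    by (rule integral_mono[OF integrable_norm[OF Kw_int] integrable_mult_right[OF bk_int]]) (rule Kw_pt)
  then show ?thesis by simp
qed

end

context pkey begin

lemma meas_identity:
  assumes fmu: "finite_measure \<mu>" and sb: "sets \<mu> = sets borel"
  shows "(CLINT x|\<mu>. l x) = c * complex_of_real (\<integral>z. Hf (y - z) \<partial>\<mu>) + (\<integral>z. Kf (y - z) \<partial>\<mu>)"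
    "(\<integral>z. Hf (y - z) \<partial>\<mu>) = (LINT s:{0<..}|lborel. (conv_meas fV \<mu> (y - s) - conv_meas fV \<mu> (y + s)) / s)"
    "set_integrable lborel {0<..} (\<lambda>s. (conv_meas fV \<mu> (y - s) - conv_meas fV \<mu> (y + s)) / s)"
    "(\<integral>z. Kf (y - z) \<partial>\<mu>) = (LINT s:{0<..}|lborel. complex_of_real (conv_meas fV \<mu> (y - s) - conv_meas fV \<mu> (y + s)) * k s)"
    "set_integrable lborel {0<..} (\<lambda>s. complex_of_real (conv_meas fV \<mu> (y - s) - conv_meas fV \<mu> (y + s)) * k s)"
proof -
  have wmH: "(\<lambda>s::real. indicator {0<..} s *\<^sub>R (1 / s)) \<in> borel_measurable borel"
  proof -
    have eqw: "(\<lambda>s::real. indicator {0<..} s *\<^sub>R (1 / s)) = (\<lambda>s::real. indicator {0<..} s * inverse s)"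
      by (simp add: fun_eq_iff divide_inverse)
    show ?thesis unfolding eqw by measurable
  qed
  note OH = outer_fubini[OF fmu sb wmH Hw_int Hw_bound, of y]
  note OK = outer_fubini[OF fmu sb kk_meas Kw_int Kw_bound, of y]
  have Hfe: "Hf (y - z) = (LINT s:{0<..}|lborel. (fV (y - z - s) - fV (y - z + s)) *\<^sub>R (1 / s))" for z
    unfolding Hf_def by (simp add: divide_inverse)
  have Kfe: "Kf (y - z) = (LINT s:{0<..}|lborel. (fV (y - z - s) - fV (y - z + s)) *\<^sub>R k s)" for z
    unfolding Kf_def by (simp add: scaleR_conv_of_real)
  have iH: "integrable \<mu> (\<lambda>z. Hf (y - z))" unfolding Hfe by (rule OH(1))
  have iK: "integrable \<mu> (\<lambda>z. Kf (y - z))" unfolding Kfe by (rule OK(1))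
  show "(\<integral>z. Hf (y - z) \<partial>\<mu>) = (LINT s:{0<..}|lborel. (conv_meas fV \<mu> (y - s) - conv_meas fV \<mu> (y + s)) / s)"
    unfolding Hfe OH(3)[symmetric] by (simp add: divide_inverse)
  show "set_integrable lborel {0<..} (\<lambda>s. (conv_meas fV \<mu> (y - s) - conv_meas fV \<mu> (y + s)) / s)"
    using OH(2) by (simp add: divide_inverse)
  show "(\<integral>z. Kf (y - z) \<partial>\<mu>) = (LINT s:{0<..}|lborel. complex_of_real (conv_meas fV \<mu> (y - s) - conv_meas fV \<mu> (y + s)) * k s)"
    unfolding Kfe OK(3)[symmetric] by (simp add: scaleR_conv_of_real)
  show "set_integrable lborel {0<..} (\<lambda>s. complex_of_real (conv_meas fV \<mu> (y - s) - conv_meas fV \<mu> (y + s)) * k s)"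
    using OK(2) by (simp add: scaleR_conv_of_real)
  have "(CLINT x|\<mu>. l x) = (CLINT z|\<mu>. c * complex_of_real (Hf (y - z)) + Kf (y - z))"
    using key by simp
  also have "\<dots> = c * complex_of_real (\<integral>z. Hf (y - z) \<partial>\<mu>) + (\<integral>z. Kf (y - z) \<partial>\<mu>)"
    using iH iK by simp
  finally show "(CLINT x|\<mu>. l x) = c * complex_of_real (\<integral>z. Hf (y - z) \<partial>\<mu>) + (\<integral>z. Kf (y - z) \<partial>\<mu>)" .
qed

end


context pset begin

lemma conv_integrable:
  assumes fmu: "finite_measure \<mu>" and sb: "sets \<mu> = sets borel"
  shows "integrable lborel (conv_meas fV \<mu>)"
proof -
  interpret mu: finite_measure \<mu> by fact
  interpret P: pair_sigma_finite \<mu> lborel by unfold_locales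
  let ?P = "\<lambda>z x. fV (x - z)"
  have Ssets: "sets (\<mu> \<Otimes>\<^sub>M lborel) = sets (borel \<Otimes>\<^sub>M borel)"
    by (rule sets_pair_measure_cong) (simp_all add: sb)
  have mP: "case_prod ?P \<in> borel_measurable (\<mu> \<Otimes>\<^sub>M lborel)"
    unfolding measurable_cong_sets[OF Ssets refl] by measurable
  have one: "(\<integral>x. fV (x - z) \<partial>lborel) = 1" for z
  proof -
    have "(\<integral>v. fV v \<partial>lborel) = \<bar>1\<bar> *\<^sub>R (\<integral>x. fV (-z + 1 * x) \<partial>lborel)"
      by (rule lborel_integral_real_affine) simp
    then show ?thesis using fone by simp
  qed
  have ix: "integrable lborel (\<lambda>x. fV (x - z))" for z
    using int_fV_shift[of 1 "-z"] by simp
  have int: "integrable (\<mu> \<Otimes>\<^sub>M lborel) (case_prod ?P)"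
  proof (rule P.Fubini_integrable[OF mP])
    have "(\<lambda>z. \<integral>x. norm (case_prod ?P (z, x)) \<partial>lborel) = (\<lambda>z. 1)"
      using one nn by (simp add: fun_eq_iff)
    then show "integrable \<mu> (\<lambda>z. \<integral>x. norm (case_prod ?P (z, x)) \<partial>lborel)" by simp
    show "AE z in \<mu>. integrable lborel (\<lambda>x. case_prod ?P (z, x))" using ix by simp
  qed
  interpret Q: pair_sigma_finite lborel \<mu> by unfold_locales
  have "integrable (lborel \<Otimes>\<^sub>M \<mu>) (\<lambda>(x, z). ?P z x)"
    using P.integrable_product_swap[OF int] by simp
  from Q.integrable_fst'[OF this] show ?thesis
    unfolding conv_meas_def by simp
qed

lemma hilbert_conv:
  assumes f1: "finite_measure \<mu>1" and s1: "sets \<mu>1 = sets borel"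
    and f2: "finite_measure \<mu>2" and s2: "sets \<mu>2 = sets borel"
    and D1: "set_integrable lborel {0<..} (\<lambda>s. (conv_meas fV \<mu>1 (y - s) - conv_meas fV \<mu>1 (y + s)) / s)"
    and D2: "set_integrable lborel {0<..} (\<lambda>s. (conv_meas fV \<mu>2 (y - s) - conv_meas fV \<mu>2 (y + s)) / s)"
  shows "hilbert (\<lambda>x. conv_meas fV \<mu>1 x - conv_meas fV \<mu>2 x) y
     = (1 / pi) * ((LINT s:{0<..}|lborel. (conv_meas fV \<mu>1 (y - s) - conv_meas fV \<mu>1 (y + s)) / s)
                 - (LINT s:{0<..}|lborel. (conv_meas fV \<mu>2 (y - s) - conv_meas fV \<mu>2 (y + s)) / s))"
proof -
  define f where "f = (\<lambda>x. conv_meas fV \<mu>1 x - conv_meas fV \<mu>2 x)"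
  have fi: "integrable lborel f"
    unfolding f_def using conv_integrable[OF f1 s1] conv_integrable[OF f2 s2] by simp
  have fm[measurable]: "f \<in> borel_measurable borel" using fi by auto
  have fiy: "integrable lborel (\<lambda>t. f (y + (-1) * t))"
    by (rule lborel_integrable_real_affine[OF fi]) simp
  define H where "H s = indicator {0<..} s * ((f (y - s) - f (y + s)) / s)" for s
  have feq: "(\<lambda>s. (conv_meas fV \<mu>1 (y - s) - conv_meas fV \<mu>1 (y + s)) / s
           - (conv_meas fV \<mu>2 (y - s) - conv_meas fV \<mu>2 (y + s)) / s) = (\<lambda>s. (f (y - s) - f (y + s)) / s)"
    unfolding f_def by (rule ext) (simp add: algebra_simps flip: diff_divide_distrib)
  have iH: "integrable lborel H"
  proof -
    have "set_integrable lborel {0<..} (\<lambda>s. (f (y - s) - f (y + s)) / s)"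
    proof -
      have "set_integrable lborel {0<..} (\<lambda>s. (conv_meas fV \<mu>1 (y - s) - conv_meas fV \<mu>1 (y + s)) / s
           - (conv_meas fV \<mu>2 (y - s) - conv_meas fV \<mu>2 (y + s)) / s)"
        using D1 D2 by (rule set_integral_diff)
      then show ?thesis using feq by simp
    qed
    then show ?thesis unfolding H_def set_integrable_def by simp
  qed
  have eqd: "(LINT t:{t. \<delta> < \<bar>t\<bar>}|lborel. f (y - t) / t) = (\<integral>s. indicator {\<delta><..} s * H s \<partial>lborel)"
    if d: "0 < \<delta>" for \<delta>
  proof -
    define G where "G t = indicator {t. \<delta> < \<bar>t\<bar>} t *\<^sub>R (f (y - t) / t)" for t
    have iG: "integrable lborel G"
    proof (rule Bochner_Integration.integrable_bound[OF integrable_mult_right[OF integrable_norm[OF fiy], of "1/\<delta>"]])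
      show "G \<in> borel_measurable lborel" unfolding G_def by measurable
      show "AE t in lborel. norm (G t) \<le> norm (1/\<delta> * norm (f (y + (-1) * t)))"
      proof (rule AE_I2)
        fix t
        show "norm (G t) \<le> norm (1/\<delta> * norm (f (y + (-1) * t)))"
        proof (cases "\<delta> < \<bar>t\<bar>")
          case True
          then have "\<bar>f (y - t)\<bar> / \<bar>t\<bar> \<le> \<bar>f (y - t)\<bar> / \<delta>"
            using d by (intro divide_left_mono) auto
          then show ?thesis using True d by (simp add: G_def abs_div)
        qed (simp add: G_def)
      qed
    qed
    have a1: "set_integrable lborel {0<..} G" unfolding set_integrable_def
      by (rule integrable_mult_indicator) (use iG in auto)
    have "integrable lborel (\<lambda>t. G (0 + (-1) * t))" by (rule lborel_integrable_real_affine[OF iG]) simp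
    then have a2: "set_integrable lborel {0<..} (\<lambda>t. G (-t))" unfolding set_integrable_def
      by (intro integrable_mult_indicator) auto
    have "(LINT t:{t. \<delta> < \<bar>t\<bar>}|lborel. f (y - t) / t) = (\<integral>t. G t \<partial>lborel)"
      unfolding G_def set_lebesgue_integral_def ..
    also have "\<dots> = (LINT s:{0<..}|lborel. G s + G (-s))" by (rule integral_split0(2)[OF a1 a2])
    also have "\<dots> = (\<integral>s. indicator {\<delta><..} s * H s \<partial>lborel)"
      unfolding set_lebesgue_integral_def
    proof (rule Bochner_Integration.integral_cong[OF refl])
      fix s :: real
      show "indicator {0<..} s *\<^sub>R (G s + G (-s)) = indicator {\<delta><..} s * H s"
        using d by (auto simp: G_def H_def indicator_def diff_divide_distrib)
    qed
    finally show ?thesis .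
  qed
  have lim: "((\<lambda>\<delta>. \<integral>s. indicator {\<delta><..} s * H s \<partial>lborel) \<longlongrightarrow> (\<integral>s. H s \<partial>lborel)) (at_right 0)"
  proof (rule tendsto_at_right_sequentially[where b=1])
    fix S :: "nat \<Rightarrow> real" assume Sp: "\<And>n. 0 < S n" and S0: "S \<longlonglongrightarrow> 0"
    show "(\<lambda>n. \<integral>s. indicator {S n<..} s * H s \<partial>lborel) \<longlonglongrightarrow> (\<integral>s. H s \<partial>lborel)"
    proof (rule integral_dominated_convergence[where w="\<lambda>s. norm (H s)"])
      show "integrable lborel (\<lambda>s. norm (H s))" using iH by simp
      show "H \<in> borel_measurable lborel" using iH by auto
      show "(\<lambda>s. indicator {S n<..} s * H s) \<in> borel_measurable lborel" for n using iH by auto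
      show "AE s in lborel. norm (indicator {S n<..} s * H s) \<le> norm (H s)" for n
        by (auto simp: indicator_def)
      show "AE s in lborel. (\<lambda>n. indicator {S n<..} s * H s) \<longlonglongrightarrow> H s"
      proof (rule AE_I2)
        fix s :: real
        show "(\<lambda>n. indicator {S n<..} s * H s) \<longlonglongrightarrow> H s"
        proof (cases "0 < s")
          case True
          have "eventually (\<lambda>n. S n < s) sequentially"
            using order_tendstoD(2)[OF S0 True] .
          then have "eventually (\<lambda>n. indicator {S n<..} s * H s = H s) sequentially"
            by eventually_elim (simp add: indicator_def)
          then show ?thesis by (rule tendsto_eventually)
        next
          case False
          then show ?thesis by (simp add: H_def)
        qed
      qed
    qed
  qed simp
  have "((\<lambda>\<delta>. LINT t:{t. \<delta> < \<bar>t\<bar>}|lborel. f (y - t) / t) \<longlongrightarrow> (\<integral>s. H s \<partial>lborel)) (at_right 0)"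
  proof (subst tendsto_cong)
    show "\<forall>\<^sub>F \<delta> in at_right 0. (LINT t:{t. \<delta> < \<bar>t\<bar>}|lborel. f (y - t) / t) = (\<integral>s. indicator {\<delta><..} s * H s \<partial>lborel)"
      using eventually_at_right_less[of "0::real"] by eventually_elim (rule eqd)
  qed (rule lim)
  then have "hilbert f y = (1 / pi) * (\<integral>s. H s \<partial>lborel)"
    unfolding hilbert_def by (simp add: tendsto_Lim)
  also have "(\<integral>s. H s \<partial>lborel) = (LINT s:{0<..}|lborel. (conv_meas fV \<mu>1 (y - s) - conv_meas fV \<mu>1 (y + s)) / s)
                 - (LINT s:{0<..}|lborel. (conv_meas fV \<mu>2 (y - s) - conv_meas fV \<mu>2 (y + s)) / s)"
  proof -
    have "(\<integral>s. H s \<partial>lborel) = (LINT s:{0<..}|lborel. (conv_meas fV \<mu>1 (y - s) - conv_meas fV \<mu>1 (y + s)) / s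
           - (conv_meas fV \<mu>2 (y - s) - conv_meas fV \<mu>2 (y + s)) / s)"
      unfolding H_def set_lebesgue_integral_def
      by (rule Bochner_Integration.integral_cong[OF refl]) (use fun_cong[OF feq] in simp)
    also have "\<dots> = (LINT s:{0<..}|lborel. (conv_meas fV \<mu>1 (y - s) - conv_meas fV \<mu>1 (y + s)) / s)
                 - (LINT s:{0<..}|lborel. (conv_meas fV \<mu>2 (y - s) - conv_meas fV \<mu>2 (y + s)) / s)"
      by (rule set_integral_diff(2)[OF D1 D2])
    finally show ?thesis .
  qed
  finally show ?thesis unfolding f_def .
qed

end


theorem proposition8:
  fixes M :: "'a measure" and X V :: "'a \<Rightarrow> real"
    and fV g :: "real \<Rightarrow> real" and y :: real
    and c :: complex and k :: "real \<Rightarrow> complex"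
  assumes "prob_space M"
    and "X \<in> borel_measurable M" and "V \<in> borel_measurable M"
    and "prob_space.indep_var M borel X borel V"
    and "\<forall>v. 0 \<le> fV v"
    and "distributed M lborel V (\<lambda>v. ennreal (fV v))"
    and "C0_1 fV"
    and "AE \<omega> in lborel. char (distr M borel V) \<omega> \<noteq> 0"
    and "g \<in> borel_measurable borel"
    and "Xi0 (lam g fV y)"
    and "integrable lborel (fourier (lam g fV y))"
    and "set_borel_measurable lborel {0<..} k"
    and "set_integrable lborel {0<..1} (\<lambda>t. t * cmod (k t))"
    and "set_integrable lborel {1..} (\<lambda>t. cmod (k t))"
    and "AE \<omega> in lborel. Q g fV (distr M borel V) y \<omega> =
           iexp (\<omega> * y) * (- \<i> * complex_of_real pi * c * complex_of_real (sgn \<omega>)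
             + (LINT t:{0<..}|lborel. (iexp (- \<omega> * t) - iexp (\<omega> * t)) * k t))"
  shows "(\<forall>\<mu>1 \<mu>2. finite_measure \<mu>1 \<longrightarrow> finite_measure \<mu>2 \<longrightarrow>
             sets \<mu>1 = sets borel \<longrightarrow> sets \<mu>2 = sets borel \<longrightarrow>
             (let f = (\<lambda>x. conv_meas fV \<mu>1 x - conv_meas fV \<mu>2 x) in
               (CLINT x|\<mu>1. lam g fV y x) - (CLINT x|\<mu>2. lam g fV y x)
               = complex_of_real pi * c * complex_of_real (hilbert f y)
                 + (LINT t:{0<..}|lborel. complex_of_real (f (y - t) - f (y + t)) * k t)))
       \<and> (0 < conv_meas fV (distr M borel X) y \<longrightarrow>
           (let fY = conv_meas fV (distr M borel X) in
             complex_of_real (cond_exp_at g fV (distr M borel X) y)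
             = (1 / complex_of_real (fY y)) *
               (complex_of_real pi * c * complex_of_real (hilbert fY y)
                + (LINT t:{0<..}|lborel. complex_of_real (fY (y - t) - fY (y + t)) * k t))))"
proof -
  note A = assms
  interpret P: prob_space M by (rule A(1))
  obtain B where fB: "\<And>x. \<bar>fV x\<bar> \<le> B" using C0_1_facts(3)[OF A(7)] by blast
  obtain L where L0: "0 \<le> L" and fL: "\<And>a b. \<bar>fV a - fV b\<bar> \<le> L * \<bar>a - b\<bar>"
    using C0_1_facts(4)[OF A(7)] by blast
  have fc: "continuous_on UNIV fV" and fm: "fV \<in> borel_measurable borel"
    using C0_1_facts(1,2)[OF A(7)] by auto
  have fint: "integrable lborel fV" and fone: "(\<integral>v. fV v \<partial>lborel) = 1"
    using density_facts[OF A(1) A(6)] A(5) by auto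
  have PS: "pset fV B L"
    by unfold_locales (use A(5) fm fint fone fB fL L0 fc in auto)
  have PK: "psetk fV B L k"
    by (rule psetk.intro[OF PS], unfold_locales) (use A(12,13,14) in auto)
  define l where "l = lam g fV y"
  have lc: "continuous_on UNIV l" and lt: "(l \<longlongrightarrow> 0) at_infinity" and li: "integrable lborel l"
    using A(10) unfolding l_def Xi0_def by auto
  obtain Bl where lb: "\<And>x. norm (l x) \<le> Bl" using bounded_C0[OF lc lt] by blast
  have charphi: "char (distr M borel V) = pset.phi fV"
    by (rule ext) (simp add: char_density[OF A(1) A(6)] A(5) fm pset.phi_def[OF PS])
  have phim: "pset.phi fV \<in> borel_measurable borel" using pset.phi_meas[OF PS] .
  have ae0: "AE \<omega> in lborel. pset.phi fV (-\<omega>) \<noteq> 0"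
  proof -
    have "AE \<omega> in lborel. pset.phi fV \<omega> \<noteq> 0" using A(8) unfolding charphi .
    then have "AE \<omega> in distr lborel borel uminus. pset.phi fV \<omega> \<noteq> 0"
      by (subst lborel_distr_uminus)
    then show ?thesis
      by (subst (asm) AE_distr_iff) (use phim in auto)
  qed
  have hyp: "AE \<omega> in lborel. fourier l \<omega> = iexp (\<omega> * y) *
        (- \<i> * complex_of_real pi * c * complex_of_real (sgn \<omega>) + psetk.A2 k \<omega>) * pset.phi fV (-\<omega>)"
    using ae0 A(15)
  proof eventually_elim
    fix \<omega> assume nz: "pset.phi fV (-\<omega>) \<noteq> 0"
      and q: "Q g fV (distr M borel V) y \<omega> = iexp (\<omega> * y) * (- \<i> * complex_of_real pi * c * complex_of_real (sgn \<omega>)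
             + (LINT t:{0<..}|lborel. (iexp (- \<omega> * t) - iexp (\<omega> * t)) * k t))"
    have "fourier l \<omega> / pset.phi fV (-\<omega>) = iexp (\<omega> * y) * (- \<i> * complex_of_real pi * c * complex_of_real (sgn \<omega>)
             + psetk.A2 k \<omega>)"
      using q nz unfolding Q_def charphi psetk.A2_def[OF PK] l_def by simp
    then show "fourier l \<omega> = iexp (\<omega> * y) *
        (- \<i> * complex_of_real pi * c * complex_of_real (sgn \<omega>) + psetk.A2 k \<omega>) * pset.phi fV (-\<omega>)"
      using nz by (simp add: divide_eq_eq)
  qed
  have fi: "integrable lborel (fourier l)" using A(11) unfolding l_def .
  interpret K: pkey fV B L k l Bl c y
    by (rule pkey.intro[OF PK], unfold_locales) (use lc lb li hyp fi in auto)
  have part1: "(CLINT x|\<mu>1. lam g fV y x) - (CLINT x|\<mu>2. lam g fV y x)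
               = complex_of_real pi * c * complex_of_real (hilbert (\<lambda>x. conv_meas fV \<mu>1 x - conv_meas fV \<mu>2 x) y)
                 + (LINT t:{0<..}|lborel. complex_of_real ((conv_meas fV \<mu>1 (y - t) - conv_meas fV \<mu>2 (y - t))
                      - (conv_meas fV \<mu>1 (y + t) - conv_meas fV \<mu>2 (y + t))) * k t)"
    if f1: "finite_measure \<mu>1" and f2: "finite_measure \<mu>2" and s1: "sets \<mu>1 = sets borel" and s2: "sets \<mu>2 = sets borel"
    for \<mu>1 \<mu>2
  proof -
    note M1 = K.meas_identity[OF f1 s1] and M2 = K.meas_identity[OF f2 s2]
    have H: "hilbert (\<lambda>x. conv_meas fV \<mu>1 x - conv_meas fV \<mu>2 x) y
        = (1 / pi) * ((\<integral>z. K.Hf (y - z) \<partial>\<mu>1) - (\<integral>z. K.Hf (y - z) \<partial>\<mu>2))"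
      using K.hilbert_conv[OF f1 s1 f2 s2 M1(3) M2(3)] M1(2) M2(2) by simp
    have KK: "(LINT t:{0<..}|lborel. complex_of_real ((conv_meas fV \<mu>1 (y - t) - conv_meas fV \<mu>2 (y - t))
                      - (conv_meas fV \<mu>1 (y + t) - conv_meas fV \<mu>2 (y + t))) * k t)
        = (\<integral>z. K.Kf (y - z) \<partial>\<mu>1) - (\<integral>z. K.Kf (y - z) \<partial>\<mu>2)"
    proof -
      have "(LINT t:{0<..}|lborel. complex_of_real ((conv_meas fV \<mu>1 (y - t) - conv_meas fV \<mu>2 (y - t))
                      - (conv_meas fV \<mu>1 (y + t) - conv_meas fV \<mu>2 (y + t))) * k t)
         = (LINT t:{0<..}|lborel. complex_of_real (conv_meas fV \<mu>1 (y - t) - conv_meas fV \<mu>1 (y + t)) * k t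
             - complex_of_real (conv_meas fV \<mu>2 (y - t) - conv_meas fV \<mu>2 (y + t)) * k t)"
        by (rule set_lebesgue_integral_cong) (auto simp: algebra_simps)
      also have "\<dots> = (LINT t:{0<..}|lborel. complex_of_real (conv_meas fV \<mu>1 (y - t) - conv_meas fV \<mu>1 (y + t)) * k t)
             - (LINT t:{0<..}|lborel. complex_of_real (conv_meas fV \<mu>2 (y - t) - conv_meas fV \<mu>2 (y + t)) * k t)"
        by (rule set_integral_diff(2)[OF M1(5) M2(5)])
      finally show ?thesis using M1(4) M2(4) by simp
    qed
    show ?thesis
      unfolding M1(1)[unfolded l_def] M2(1)[unfolded l_def] H KK by (simp add: algebra_simps)
  qed
  show ?thesis
  proof (intro conjI allI impI)
    fix \<mu>1 \<mu>2 :: "real measure"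
    assume f1: "finite_measure \<mu>1" and f2: "finite_measure \<mu>2" and s1: "sets \<mu>1 = sets borel" and s2: "sets \<mu>2 = sets borel"
    show "let f = (\<lambda>x. conv_meas fV \<mu>1 x - conv_meas fV \<mu>2 x) in
               (CLINT x|\<mu>1. lam g fV y x) - (CLINT x|\<mu>2. lam g fV y x)
               = complex_of_real pi * c * complex_of_real (hilbert f y)
                 + (LINT t:{0<..}|lborel. complex_of_real (f (y - t) - f (y + t)) * k t)"
      unfolding Let_def using part1[OF f1 f2 s1 s2] by simp
  next
    assume pos: "0 < conv_meas fV (distr M borel X) y"
    define PX where "PX = distr M borel X"
    have fPX: "finite_measure PX" unfolding PX_def
      using P.prob_space_distr[OF A(2)] by (simp add: prob_space.finite_measure)
    have sPX: "sets PX = sets borel" unfolding PX_def by simp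
    have fN: "finite_measure (null_measure borel :: real measure)" by (rule finite_measureI) simp
    have sN: "sets (null_measure borel :: real measure) = sets borel" by simp
    have cN: "conv_meas fV (null_measure borel) x = 0" for x by (simp add: conv_meas_def)
    note p1 = part1[OF fPX fN sPX sN]
    have eqf: "(\<lambda>x. conv_meas fV PX x - conv_meas fV (null_measure borel) x) = conv_meas fV PX"
      by (simp add: cN)
    have "(CLINT x|PX. lam g fV y x) = complex_of_real pi * c * complex_of_real (hilbert (conv_meas fV PX) y)
          + (LINT t:{0<..}|lborel. complex_of_real (conv_meas fV PX (y - t) - conv_meas fV PX (y + t)) * k t)"
      using p1 unfolding eqf by (simp add: cN)
    moreover have "(CLINT x|PX. lam g fV y x) = complex_of_real (\<integral>x. g x * fV (y - x) \<partial>PX)"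
      unfolding lam_def by (rule integral_complex_of_real)
    ultimately show "let fY = conv_meas fV (distr M borel X) in
             complex_of_real (cond_exp_at g fV (distr M borel X) y)
             = (1 / complex_of_real (fY y)) *
               (complex_of_real pi * c * complex_of_real (hilbert fY y)
                + (LINT t:{0<..}|lborel. complex_of_real (fY (y - t) - fY (y + t)) * k t))"
      unfolding Let_def cond_exp_at_def PX_def[symmetric] using pos[folded PX_def]
      by (simp add: divide_simps)
  qed
qed


end
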